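(* Let $P\subseteq\{\text{monotonic},\text{topped},\text{cufi}\}$ and let $\mathbf{L}_P$ be the least predicate modal logic having all the properties in $P$. Then for every formula $\varphi$: $\varphi\in\mathbf{L}_P$ if and only if $Z\models\varphi$ for every neighborhood frame $Z$ having all the properties in $P$ (models on such frames having constant domains). In particular (for $P=\emptyset$), the least predicate modal logic is sound and complete with respect to the class of all neighborhood frames with constant domains.
   Context: Language: countable set $\mathsf{V}$ of variables, $\top,\bot$, $\land,\neg$, $\forall$, countably many $n$-ary predicate symbols for each $n\in\mathbb{N}$, and $\Box$. A predicate modal logic is a set of formulas containing all theorems of classical predicate logic, closed under substitution, modus ponens, generalization, and the rule $\varphi\equiv\psi\in\mathbf{L}\Rightarrow\Box\varphi\equiv\Box\psi\in\mathbf{L}$. It is monotonic if it contains $\Box(p\land q)\supset\Box p\land\Box q$, topped if it contains $\Box\top$, cufi if it contains $\Box p\land\Box q\supset\Box(p\land q)$. A neighborhood frame is $\langle C,\mathcal{V}\rangle$ with $C\ne\emptyset$, $\mathcal{V}:C\to\mathcal{P}(\mathcal{P}(C))$; monotonic if each $\mathcal{V}(c)$ is upward closed under $\subseteq$, topped if $C\in\mathcal{V}(c)$ for all $c$, cufi if each $\mathcal{V}(c)$ is closed under non-empty finite intersections. A model on $Z=\langle C,\mathcal{V}\rangle$ adds a non-empty domain $\mathcal{D}$ and $\mathcal{I}(c,P)\subseteq\mathcal{D}^n$; truth sets under assignments $\mathcal{A}:\mathsf{V}\to\mathcal{D}$ are classical, with $\forall$ as intersection over $x$-variants and $c\in\|\Box\varphi\|_{\mathcal{A}}$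 iff $\|\varphi\|_{\mathcal{A}}\in\mathcal{V}(c)$. $Z\models\varphi$ means $\|\varphi\|_{\mathcal{A}}=C$ for every model on $Z$ and every assignment. *)

theory Defs
  imports Main
begin

text \<open>An atomic formula Atom i ys applies the
  predicate symbol with index i and arity length ys to the variables ys; thus for each
  arity n there are countably many n-ary predicate symbols (indexed by i).\<close>

datatype fm = Top | Bot | Atom nat "nat list" | And fm fm | Neg fm | All nat fm | Box fm

definition Imp :: "fm \<Rightarrow> fm \<Rightarrow> fm" where
  "Imp a b = Neg (And a (Neg b))"

definition Iff :: "fm \<Rightarrow> fm \<Rightarrow> fm" where
  "Iff a b = And (Imp a b) (Imp b a)"

fun fv :: "fm \<Rightarrow> nat set" where
  "fv Top = {}"
| "fv Bot = {}"
| "fv (Atom i ys) = set ys"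
| "fv (And a b) = fv a \<union> fv b"
| "fv (Neg a) = fv a"
| "fv (All x a) = fv a - {x}"
| "fv (Box a) = fv a"

fun box_free :: "fm \<Rightarrow> bool" where
  "box_free (And a b) = (box_free a \<and> box_free b)"
| "box_free (Neg a) = box_free a"
| "box_free (All x a) = box_free a"
| "box_free (Box a) = False"
| "box_free _ = True"

fun vsubst :: "(nat \<Rightarrow> nat) \<Rightarrow> fm \<Rightarrow> fm" where
  "vsubst f Top = Top"
| "vsubst f Bot = Bot"
| "vsubst f (Atom i ys) = Atom i (map f ys)"
| "vsubst f (And a b) = And (vsubst f a) (vsubst f b)"
| "vsubst f (Neg a) = Neg (vsubst f a)"
| "vsubst f (All x a) = All x (vsubst (f(x := x)) a)"
| "vsubst f (Box a) = Box (vsubst f a)"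

fun vfree :: "(nat \<Rightarrow> nat) \<Rightarrow> fm \<Rightarrow> bool" where
  "vfree f (And a b) = (vfree f a \<and> vfree f b)"
| "vfree f (Neg a) = vfree f a"
| "vfree f (All x a) = (vfree (f(x := x)) a \<and> (\<forall>y \<in> fv a - {x}. f y \<noteq> x))"
| "vfree f (Box a) = vfree f a"
| "vfree f _ = True"

definition inst :: "nat list \<Rightarrow> nat list \<Rightarrow> nat \<Rightarrow> nat" where
  "inst xs ys v = (case map_of (zip xs ys) v of Some y \<Rightarrow> y | None \<Rightarrow> v)"

text \<open>A substitution sigma assigns to
  the symbol (i, n) a template (xs, psi); if xs is a list of n distinct variables, then
  each atom Atom i ys (length ys = n) is replaced by psi with xs replaced by ys.\<close>
type_synonym psub = "nat \<Rightarrow> nat \<Rightarrow> nat list \<times> fm"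

fun psubst :: "psub \<Rightarrow> fm \<Rightarrow> fm" where
  "psubst \<sigma> Top = Top"
| "psubst \<sigma> Bot = Bot"
| "psubst \<sigma> (Atom i ys) = (case \<sigma> i (length ys) of (xs, \<psi>) \<Rightarrow>
     if length xs = length ys \<and> distinct xs then vsubst (inst xs ys) \<psi> else Atom i ys)"
| "psubst \<sigma> (And a b) = And (psubst \<sigma> a) (psubst \<sigma> b)"
| "psubst \<sigma> (Neg a) = Neg (psubst \<sigma> a)"
| "psubst \<sigma> (All x a) = All x (psubst \<sigma> a)"
| "psubst \<sigma> (Box a) = Box (psubst \<sigma> a)"

text \<open>Admissibility of a predicate substitution (no variable capture); B is the set of
  variables bound in the context.\<close>
fun psfree_aux :: "nat set \<Rightarrow> psub \<Rightarrow> fm \<Rightarrow> bool" where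
  "psfree_aux B \<sigma> (Atom i ys) = (case \<sigma> i (length ys) of (xs, \<psi>) \<Rightarrow>
     (length xs = length ys \<and> distinct xs \<longrightarrow>
        vfree (inst xs ys) \<psi> \<and> (fv \<psi> - set xs) \<inter> B = {}))"
| "psfree_aux B \<sigma> (And a b) = (psfree_aux B \<sigma> a \<and> psfree_aux B \<sigma> b)"
| "psfree_aux B \<sigma> (Neg a) = psfree_aux B \<sigma> a"
| "psfree_aux B \<sigma> (All x a) = psfree_aux (insert x B) \<sigma> a"
| "psfree_aux B \<sigma> (Box a) = psfree_aux B \<sigma> a"
| "psfree_aux B \<sigma> _ = True"

definition psfree :: "psub \<Rightarrow> fm \<Rightarrow> bool" where
  "psfree \<sigma> a = psfree_aux {} \<sigma> a"

fun cl_eval :: "'d set \<Rightarrow> (nat \<Rightarrow> nat \<Rightarrow> 'd list set) \<Rightarrow> (nat \<Rightarrow> 'd) \<Rightarrow> fm \<Rightarrow> bool" where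
  "cl_eval D I A Top = True"
| "cl_eval D I A Bot = False"
| "cl_eval D I A (Atom i ys) = (map A ys \<in> I i (length ys))"
| "cl_eval D I A (And a b) = (cl_eval D I A a \<and> cl_eval D I A b)"
| "cl_eval D I A (Neg a) = (\<not> cl_eval D I A a)"
| "cl_eval D I A (All x a) = (\<forall>d \<in> D. cl_eval D I (A(x := d)) a)"
| "cl_eval D I A (Box a) = False"

text \<open>Theorems of classical predicate logic: box-free formulas true in every classical
  structure (domains taken as nonempty subsets of nat; by Loewenheim-Skolem this is
  classical validity for our countable language).\<close>
definition CPL_thm :: "fm \<Rightarrow> bool" where
  "CPL_thm a \<longleftrightarrow> box_free a \<and>
     (\<forall>(D :: nat set) I A. D \<noteq> {} \<and> (\<forall>i n. I i n \<subseteq> {l. length l = n \<and> set l \<subseteq> D})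
        \<and> (\<forall>v. A v \<in> D) \<longrightarrow> cl_eval D I A a)"

definition pml :: "fm set \<Rightarrow> bool" where
  "pml L \<longleftrightarrow>
     (\<forall>a. CPL_thm a \<longrightarrow> a \<in> L)
   \<and> (\<forall>\<sigma> a. a \<in> L \<and> psfree \<sigma> a \<longrightarrow> psubst \<sigma> a \<in> L)
   \<and> (\<forall>a b. a \<in> L \<and> Imp a b \<in> L \<longrightarrow> b \<in> L)
   \<and> (\<forall>x a. a \<in> L \<longrightarrow> All x a \<in> L)
   \<and> (\<forall>a b. Iff a b \<in> L \<longrightarrow> Iff (Box a) (Box b) \<in> L)"

datatype mprop = Monotonic | Topped | Cufi

definition pp :: fm where "pp = Atom 0 []"
definition qq :: fm where "qq = Atom 1 []"

definition axM :: fm where "axM = Imp (Box (And pp qq)) (And (Box pp) (Box qq))"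
definition axN :: fm where "axN = Box Top"
definition axC :: fm where "axC = Imp (And (Box pp) (Box qq)) (Box (And pp qq))"

definition logic_has :: "mprop set \<Rightarrow> fm set \<Rightarrow> bool" where
  "logic_has P L \<longleftrightarrow> (Monotonic \<in> P \<longrightarrow> axM \<in> L) \<and> (Topped \<in> P \<longrightarrow> axN \<in> L)
     \<and> (Cufi \<in> P \<longrightarrow> axC \<in> L)"

definition LP :: "mprop set \<Rightarrow> fm set" where
  "LP P = \<Inter> {L. pml L \<and> logic_has P L}"

definition nframe :: "'w set \<Rightarrow> ('w \<Rightarrow> 'w set set) \<Rightarrow> bool" where
  "nframe C V \<longleftrightarrow> C \<noteq> {} \<and> (\<forall>c \<in> C. V c \<subseteq> Pow C)"

definition frame_has :: "mprop set \<Rightarrow> 'w set \<Rightarrow> ('w \<Rightarrow> 'w set set) \<Rightarrow> bool" where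
  "frame_has P C V \<longleftrightarrow>
     (Monotonic \<in> P \<longrightarrow> (\<forall>c \<in> C. \<forall>X \<in> V c. \<forall>Y. X \<subseteq> Y \<and> Y \<subseteq> C \<longrightarrow> Y \<in> V c))
   \<and> (Topped \<in> P \<longrightarrow> (\<forall>c \<in> C. C \<in> V c))
   \<and> (Cufi \<in> P \<longrightarrow> (\<forall>c \<in> C. \<forall>F. finite F \<and> F \<noteq> {} \<and> F \<subseteq> V c \<longrightarrow> \<Inter>F \<in> V c))"

fun truth :: "'w set \<Rightarrow> ('w \<Rightarrow> 'w set set) \<Rightarrow> 'd set \<Rightarrow> ('w \<Rightarrow> nat \<Rightarrow> nat \<Rightarrow> 'd list set)
    \<Rightarrow> (nat \<Rightarrow> 'd) \<Rightarrow> fm \<Rightarrow> 'w set" where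
  "truth C V D I A Top = C"
| "truth C V D I A Bot = {}"
| "truth C V D I A (Atom i ys) = {c \<in> C. map A ys \<in> I c i (length ys)}"
| "truth C V D I A (And a b) = truth C V D I A a \<inter> truth C V D I A b"
| "truth C V D I A (Neg a) = C - truth C V D I A a"
| "truth C V D I A (All x a) = {c \<in> C. \<forall>d \<in> D. c \<in> truth C V D I (A(x := d)) a}"
| "truth C V D I A (Box a) = {c \<in> C. truth C V D I A a \<in> V c}"

definition is_model :: "'w set \<Rightarrow> 'd set \<Rightarrow> ('w \<Rightarrow> nat \<Rightarrow> nat \<Rightarrow> 'd list set) \<Rightarrow> bool" where
  "is_model C D I \<longleftrightarrow> D \<noteq> {} \<and> (\<forall>c \<in> C. \<forall>i n. I c i n \<subseteq> {l. length l = n \<and> set l \<subseteq> D})"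

definition fvalid :: "'w set \<Rightarrow> ('w \<Rightarrow> 'w set set) \<Rightarrow> 'd itself \<Rightarrow> fm \<Rightarrow> bool" where
  "fvalid C V _ a \<longleftrightarrow> (\<forall>(D :: 'd set) I A. is_model C D I \<and> (\<forall>v. A v \<in> D)
      \<longrightarrow> truth C V D I A a = C)"

end

theory Submission
  imports Defs "HOL-Library.Countable_Set"
begin


instance fm :: countable by countable_datatype

fun bv :: "fm \<Rightarrow> nat set" where
  "bv (And a b) = bv a \<union> bv b"
| "bv (Neg a) = bv a"
| "bv (All x a) = insert x (bv a)"
| "bv (Box a) = bv a"
| "bv _ = {}"

definition allv :: "fm \<Rightarrow> nat set" where "allv a = fv a \<union> bv a"

lemma finite_fv[simp]: "finite (fv a)" by (induct a) auto
lemma finite_bv[simp]: "finite (bv a)" by (induct a) auto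
lemma finite_allv[simp]: "finite (allv a)" by (simp add: allv_def)

lemma vsubst_cong: "(\<And>v. v \<in> fv a \<Longrightarrow> f v = g v) \<Longrightarrow> vsubst f a = vsubst g a"
proof (induct a arbitrary: f g)
  case (Atom i ys) thus ?case by simp
next
  case (And a b)
  have "vsubst f a = vsubst g a" by (rule And.hyps(1)) (use And.prems in simp)
  moreover have "vsubst f b = vsubst g b" by (rule And.hyps(2)) (use And.prems in simp)
  ultimately show ?case by simp
next
  case (Neg a)
  have "vsubst f a = vsubst g a" by (rule Neg.hyps(1)) (use Neg.prems in simp)
  thus ?case by simp
next
  case (Box a)
  have "vsubst f a = vsubst g a" by (rule Box.hyps(1)) (use Box.prems in simp)
  thus ?case by simp
next
  case (All x a)
  have "vsubst (f(x:=x)) a = vsubst (g(x:=x)) a" by (rule All.hyps(1)) (use All.prems in simp)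
  thus ?case by simp
qed simp_all

lemma id_upd_same[simp]: "id(x:=x) = id" by auto

lemma lam_upd_same[simp]: "(\<lambda>v. v)(x:=x) = (\<lambda>v::nat. v)" by auto

lemma vsubst_id': "vsubst (\<lambda>v. v) a = a"
  by (induct a) auto

lemma vsubst_id[simp]: "vsubst id a = a" using vsubst_id' by (simp add: id_def)

lemma bv_vsubst[simp]: "bv (vsubst f a) = bv a" by (induct a arbitrary: f) auto

lemma vfree_crit: "(\<And>v. f v \<noteq> v \<Longrightarrow> f v \<notin> bv a) \<Longrightarrow> vfree f a"
proof (induct a arbitrary: f)
  case (All x a)
  have "vfree (f(x:=x)) a" by (rule All.hyps) (use All.prems in auto)
  moreover have "\<forall>y \<in> fv a - {x}. f y \<noteq> x" using All.prems by force
  ultimately show ?case by simp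
qed auto

lemma vfree_id[simp]: "vfree id a" by (rule vfree_crit) auto

lemma vsubst_comp: "vfree g a \<Longrightarrow> vsubst f (vsubst g a) = vsubst (f \<circ> g) a"
proof (induct a arbitrary: f g)
  case (All y a)
  have "vsubst (f(y:=y)) (vsubst (g(y:=y)) a) = vsubst (f(y:=y) \<circ> g(y:=y)) a"
  proof (rule All.hyps)
    show "vfree (g(y:=y)) a" using All.prems by (simp only: vfree.simps)
  qed
  also have "\<dots> = vsubst ((f \<circ> g)(y:=y)) a"
    by (rule vsubst_cong) (use All.prems in auto)
  finally show ?case by (metis vsubst.simps(6))
qed auto

lemma inst_nil[simp]: "inst [] [] = id" by (auto simp: inst_def)
lemma inst_single[simp]: "inst [x] [y] = id(x:=y)" by (auto simp: inst_def fun_eq_iff)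




lemma truth_sub: "truth C V D I A a \<subseteq> C"
  by (induct a arbitrary: A) auto

lemma truth_cong: "(\<And>v. v \<in> fv a \<Longrightarrow> A v = B v) \<Longrightarrow> truth C V D I A a = truth C V D I B a"
proof (induct a arbitrary: A B)
  case (Atom i ys)
  have eq: "map A ys = map B ys" using Atom by simp
  show ?case by (simp only: truth.simps cl_eval.simps eq)
next
  case (And a b)
  have "truth C V D I A a = truth C V D I B a" by (rule And.hyps(1)) (use And.prems in simp)
  moreover have "truth C V D I A b = truth C V D I B b" by (rule And.hyps(2)) (use And.prems in simp)
  ultimately show ?case by simp
next
  case (Neg a)
  have "truth C V D I A a = truth C V D I B a" by (rule Neg.hyps(1)) (use Neg.prems in simp)
  thus ?case by simp
next
  case (Box a)
  have "truth C V D I A a = truth C V D I B a" by (rule Box.hyps(1)) (use Box.prems in simp)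
  thus ?case by simp
next
  case (All x a)
  have "\<And>d. truth C V D I (A(x:=d)) a = truth C V D I (B(x:=d)) a"
    by (rule All.hyps(1)) (use All.prems in simp)
  thus ?case by simp
qed simp_all

lemma cl_eval_cong: "(\<And>v. v \<in> fv a \<Longrightarrow> A v = B v) \<Longrightarrow> cl_eval D I A a = cl_eval D I B a"
proof (induct a arbitrary: A B)
  case (Atom i ys)
  have eq: "map A ys = map B ys" using Atom by simp
  show ?case by (simp only: truth.simps cl_eval.simps eq)
next
  case (And a b)
  have "cl_eval D I A a = cl_eval D I B a" by (rule And.hyps(1)) (use And.prems in simp)
  moreover have "cl_eval D I A b = cl_eval D I B b" by (rule And.hyps(2)) (use And.prems in simp)
  ultimately show ?case by simp
next
  case (Neg a)
  have "cl_eval D I A a = cl_eval D I B a" by (rule Neg.hyps(1)) (use Neg.prems in simp)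
  thus ?case by simp
next
  case (All x a)
  have "\<And>d. cl_eval D I (A(x:=d)) a = cl_eval D I (B(x:=d)) a"
    by (rule All.hyps(1)) (use All.prems in simp)
  thus ?case by simp
qed simp_all

lemma truth_vsubst: "vfree f a \<Longrightarrow> truth C V D I B (vsubst f a) = truth C V D I (B \<circ> f) a"
proof (induct a arbitrary: f B)
  case (All x a)
  have vn: "vfree (f(x:=x)) a \<and> (\<forall>y \<in> fv a - {x}. f y \<noteq> x)" using All.prems by (metis vfree.simps(3))
  note vf = conjunct1[OF vn] and nc = conjunct2[OF vn]
  have "\<And>d. truth C V D I (B(x:=d)) (vsubst (f(x:=x)) a) = truth C V D I ((B(x:=d)) \<circ> (f(x:=x))) a"
    by (rule All.hyps[OF vf])
  also have "\<And>d. truth C V D I ((B(x:=d)) \<circ> (f(x:=x))) a = truth C V D I ((B \<circ> f)(x:=d)) a"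
    by (rule truth_cong) (use nc in auto)
  finally show ?case unfolding comp_def by simp
qed (simp_all add: comp_def)

lemma truth_box_free: "box_free a \<Longrightarrow> c \<in> C \<Longrightarrow> (c \<in> truth C V D I A a) = cl_eval D (I c) A a"
  by (induct a arbitrary: A) auto


definition upd :: "(nat \<Rightarrow> 'd) \<Rightarrow> nat list \<Rightarrow> 'd list \<Rightarrow> nat \<Rightarrow> 'd" where
  "upd A xs l v = (case map_of (zip xs l) v of Some d \<Rightarrow> d | None \<Rightarrow> A v)"

lemma map_of_zip_map: "map_of (zip xs (map f ys)) v = map_option f (map_of (zip xs ys) v)"
proof (induct xs arbitrary: ys)
  case Nil then show ?case by simp
next
  case (Cons x xs) then show ?case by (cases ys) auto
qed

definition Isub :: "'w set \<Rightarrow> ('w \<Rightarrow> 'w set set) \<Rightarrow> 'd set \<Rightarrow> ('w \<Rightarrow> nat \<Rightarrow> nat \<Rightarrow> 'd list set)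
    \<Rightarrow> (nat \<Rightarrow> 'd) \<Rightarrow> psub \<Rightarrow> 'w \<Rightarrow> nat \<Rightarrow> nat \<Rightarrow> 'd list set" where
  "Isub C V D I A \<sigma> c i n = {l. length l = n \<and> set l \<subseteq> D \<and> (case \<sigma> i n of (xs, \<psi>) \<Rightarrow>
      if length xs = n \<and> distinct xs then c \<in> truth C V D I (upd A xs l) \<psi> else l \<in> I c i n)}"

lemma is_model_Isub: "is_model C D I \<Longrightarrow> is_model C D (Isub C V D I A \<sigma>)"
  unfolding is_model_def Isub_def by auto

lemma truth_psubst:
  assumes "psfree_aux Bs \<sigma> b" "is_model C D I" "\<forall>v. B v \<in> D" "\<forall>v. v \<notin> Bs \<longrightarrow> B v = A v"
  shows "truth C V D I B (psubst \<sigma> b) = truth C V D (Isub C V D I A \<sigma>) B b"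
  using assms
proof (induct b arbitrary: Bs B)
  case (Atom i ys)
  obtain xs \<psi> where sig: "\<sigma> i (length ys) = (xs, \<psi>)" by force
  show ?case
  proof (cases "length xs = length ys \<and> distinct xs")
    case True
    have vf: "vfree (inst xs ys) \<psi>" and nb: "(fv \<psi> - set xs) \<inter> Bs = {}"
      using Atom.prems(1) sig True by auto
    have "truth C V D I B (psubst \<sigma> (Atom i ys)) = truth C V D I B (vsubst (inst xs ys) \<psi>)"
      using sig True by simp
    also have "\<dots> = truth C V D I (B \<circ> inst xs ys) \<psi>" by (rule truth_vsubst[OF vf])
    also have "\<dots> = truth C V D I (upd A xs (map B ys)) \<psi>"
    proof (rule truth_cong)
      fix v assume v: "v \<in> fv \<psi>"
      show "(B \<circ> inst xs ys) v = upd A xs (map B ys) v"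
      proof (cases "map_of (zip xs ys) v")
        case None
        then have "v \<notin> set xs" using True by simp
        then have "v \<notin> Bs" using nb v by auto
        then show ?thesis using None Atom.prems(4) by (simp add: upd_def inst_def map_of_zip_map)
      next
        case (Some y)
        then show ?thesis by (simp add: upd_def inst_def map_of_zip_map)
      qed
    qed
    also have "\<dots> = truth C V D (Isub C V D I A \<sigma>) B (Atom i ys)"
      using sig True Atom.prems(3) truth_sub[of C V D I "upd A xs (map B ys)" \<psi>]
      by (auto simp: Isub_def)
    finally show ?thesis .
  next
    case False
    then show ?thesis using sig Atom.prems(2,3) by (auto simp: Isub_def is_model_def)
  qed
next
  case (And a b)
  have "truth C V D I B (psubst \<sigma> a) = truth C V D (Isub C V D I A \<sigma>) B a"
    by (rule And.hyps(1)[of Bs]) (use And.prems in auto)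
  moreover have "truth C V D I B (psubst \<sigma> b) = truth C V D (Isub C V D I A \<sigma>) B b"
    by (rule And.hyps(2)[of Bs]) (use And.prems in auto)
  ultimately show ?case by simp
next
  case (Neg a)
  then show ?case by simp
next
  case (Box a)
  then show ?case by simp
next
  case (All x a)
  have "\<And>d. d \<in> D \<Longrightarrow> truth C V D I (B(x:=d)) (psubst \<sigma> a) = truth C V D (Isub C V D I A \<sigma>) (B(x:=d)) a"
  proof -
    fix d assume d: "d \<in> D"
    show "truth C V D I (B(x:=d)) (psubst \<sigma> a) = truth C V D (Isub C V D I A \<sigma>) (B(x:=d)) a"
      by (rule All.hyps[of "insert x Bs"]) (use All.prems d in auto)
  qed
  then show ?case by simp
qed simp_all


definition wit :: "'d set \<Rightarrow> (nat \<Rightarrow> nat \<Rightarrow> 'd list set) \<Rightarrow> 'd \<Rightarrow> fm \<Rightarrow> nat \<Rightarrow> (nat \<Rightarrow> 'd) \<Rightarrow> 'd" where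
  "wit D J d0 b x B = (if \<exists>d\<in>D. \<not> cl_eval D J (B(x:=d)) b
     then SOME d. d \<in> D \<and> \<not> cl_eval D J (B(x:=d)) b else d0)"

definition asg :: "'d \<Rightarrow> 'd list \<Rightarrow> nat \<Rightarrow> 'd" where
  "asg d0 l v = (if v < length l then l ! v else d0)"

primrec Sk :: "'d set \<Rightarrow> (nat \<Rightarrow> nat \<Rightarrow> 'd list set) \<Rightarrow> 'd \<Rightarrow> (nat \<Rightarrow> 'd) \<Rightarrow> nat \<Rightarrow> 'd set" where
  "Sk D J d0 A 0 = insert d0 (range A)"
| "Sk D J d0 A (Suc n) = Sk D J d0 A n \<union>
     (\<lambda>(b, x, l). wit D J d0 b x (asg d0 l)) ` (UNIV \<times> UNIV \<times> lists (Sk D J d0 A n))"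

lemma Sk_countable: "countable (Sk D J d0 A n)"
  by (induct n) auto

lemma Sk_mono: "m \<le> n \<Longrightarrow> Sk D J d0 A m \<subseteq> Sk D J d0 A n"
  by (rule lift_Suc_mono_le[where f="Sk D J d0 A"]) auto

lemma wit_in: "d0 \<in> D \<Longrightarrow> wit D J d0 b x B \<in> D"
proof (cases "\<exists>d\<in>D. \<not> cl_eval D J (B(x:=d)) b")
  case True
  then have "\<exists>d. d \<in> D \<and> \<not> cl_eval D J (B(x:=d)) b" by blast
  from someI_ex[OF this] show ?thesis unfolding wit_def using True by simp
next
  case False
  then show "d0 \<in> D \<Longrightarrow> ?thesis" unfolding wit_def by simp
qed

lemma Sk_sub: "d0 \<in> D \<Longrightarrow> range A \<subseteq> D \<Longrightarrow> Sk D J d0 A n \<subseteq> D"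
proof (induct n)
  case 0 then show ?case by simp
next
  case (Suc n)
  have "(\<lambda>(b, x, l). wit D J d0 b x (asg d0 l)) ` (UNIV \<times> UNIV \<times> lists (Sk D J d0 A n)) \<subseteq> D"
    using wit_in[OF Suc.prems(1)] by (auto split: prod.splits)
  then show ?case using Suc by simp
qed

lemma list_in_Sk: "set l \<subseteq> (\<Union>n. Sk D J d0 A n) \<Longrightarrow> \<exists>n. set l \<subseteq> Sk D J d0 A n"
proof (induct l)
  case Nil then show ?case by simp
next
  case (Cons a l)
  then obtain n where n: "set l \<subseteq> Sk D J d0 A n" by auto
  obtain m where m: "a \<in> Sk D J d0 A m" using Cons.prems by auto
  have "set (a # l) \<subseteq> Sk D J d0 A (max n m)"
    using n m Sk_mono[of n "max n m" D J d0 A] Sk_mono[of m "max n m" D J d0 A] by auto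
  then show ?case by blast
qed

lemma TV:
  assumes d0: "d0 \<in> D" and rA: "range A \<subseteq> D"
  shows "(\<forall>v. B v \<in> (\<Union>n. Sk D J d0 A n)) \<Longrightarrow>
    cl_eval (\<Union>n. Sk D J d0 A n) J B b = cl_eval D J B b"
proof (induct b arbitrary: B)
  case (And a b) then show ?case by simp
next
  case (Neg a) then show ?case by simp
next
  case (All x b)
  let ?S = "\<Union>n. Sk D J d0 A n"
  have SD: "?S \<subseteq> D" using Sk_sub[OF d0 rA] by blast
  have IH: "\<And>d. d \<in> ?S \<Longrightarrow> cl_eval ?S J (B(x:=d)) b = cl_eval D J (B(x:=d)) b"
  proof -
    fix d assume d: "d \<in> ?S"
    have "\<forall>v. (B(x:=d)) v \<in> ?S" using All.prems d by simp
    then show "cl_eval ?S J (B(x:=d)) b = cl_eval D J (B(x:=d)) b" by (rule All.hyps)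
  qed
  show ?case
  proof
    assume L: "cl_eval ?S J B (All x b)"
    have L': "\<forall>d\<in>?S. cl_eval ?S J (B(x:=d)) b" using L by (simp only: cl_eval.simps)
    show "cl_eval D J B (All x b)"
    proof (rule ccontr)
      assume "\<not> cl_eval D J B (All x b)"
      then obtain d where d: "d \<in> D" "\<not> cl_eval D J (B(x:=d)) b" by auto
      define k where "k = Suc (Max (insert 0 (fv b)))"
      have kfv: "\<And>v. v \<in> fv b \<Longrightarrow> v < k"
      proof -
        fix v assume "v \<in> fv b"
        then have "v \<le> Max (insert 0 (fv b))" by (intro Max_ge) auto
        then show "v < k" unfolding k_def by simp
      qed
      define l where "l = map B [0..<k]"
      have sl: "set l \<subseteq> ?S" unfolding l_def using All.prems by auto
      obtain n where n: "set l \<subseteq> Sk D J d0 A n" using list_in_Sk[OF sl] by (elim exE)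
      have agree: "\<And>e. cl_eval D J ((asg d0 l)(x:=e)) b = cl_eval D J (B(x:=e)) b"
        by (rule cl_eval_cong) (simp add: asg_def l_def kfv)
      have ex2: "\<exists>d. d \<in> D \<and> \<not> cl_eval D J ((asg d0 l)(x:=d)) b"
        using d agree[of d] by auto
      let ?w = "wit D J d0 b x (asg d0 l)"
      have weq: "?w = (SOME d. d \<in> D \<and> \<not> cl_eval D J ((asg d0 l)(x:=d)) b)"
        unfolding wit_def using ex2 by auto
      have "?w \<in> D \<and> \<not> cl_eval D J ((asg d0 l)(x:=?w)) b"
        unfolding weq by (rule someI_ex[OF ex2])
      then have w1: "\<not> cl_eval D J (B(x:=?w)) b" using agree[of ?w] by simp
      have "(b, x, l) \<in> UNIV \<times> UNIV \<times> lists (Sk D J d0 A n)" using n by auto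
      then have "?w \<in> (\<lambda>(b, x, l). wit D J d0 b x (asg d0 l)) ` (UNIV \<times> UNIV \<times> lists (Sk D J d0 A n))"
        by (rule rev_image_eqI) simp
      then have "?w \<in> Sk D J d0 A (Suc n)" unfolding Sk.simps by (rule UnI2)
      then have wS: "?w \<in> ?S" by (rule UN_I[OF UNIV_I])
      have "cl_eval ?S J (B(x:=?w)) b" using L' wS by (rule bspec)
      then show False using IH[OF wS] w1 by simp
    qed
  next
    assume R: "cl_eval D J B (All x b)"
    then have R': "\<forall>d\<in>D. cl_eval D J (B(x:=d)) b" by (simp only: cl_eval.simps)
    have "\<forall>d\<in>?S. cl_eval ?S J (B(x:=d)) b"
    proof
      fix d assume d: "d \<in> ?S"
      then have "d \<in> D" using SD by blast
      then have "cl_eval D J (B(x:=d)) b" using R' by blast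
      then show "cl_eval ?S J (B(x:=d)) b" using IH[OF d] by simp
    qed
    then show "cl_eval ?S J B (All x b)" by (simp only: cl_eval.simps)
  qed
qed simp_all

lemma iso_eval:
  assumes inj: "inj_on f S"
  shows "(\<forall>v. B v \<in> S) \<Longrightarrow>
    cl_eval (f ` S) (\<lambda>i n. map f ` {l \<in> J i n. set l \<subseteq> S}) (f \<circ> B) b = cl_eval S J B b"
proof (induct b arbitrary: B)
  case (Atom i ys)
  have sB: "set (map B ys) \<subseteq> S" using Atom by auto
  have "map (f \<circ> B) ys \<in> map f ` {l \<in> J i (length ys). set l \<subseteq> S} \<longleftrightarrow> map B ys \<in> J i (length ys)"
  proof
    assume "map (f \<circ> B) ys \<in> map f ` {l \<in> J i (length ys). set l \<subseteq> S}"
    then obtain l where l: "l \<in> J i (length ys)" "set l \<subseteq> S" "map (f \<circ> B) ys = map f l" by blast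
    have "inj_on f (set (map B ys) \<union> set l)" using inj by (rule inj_on_subset) (use sB l(2) in simp)
    moreover have "map f (map B ys) = map f l" using l(3) by simp
    ultimately have "map B ys = l" using inj_on_map_eq_map by blast
    then show "map B ys \<in> J i (length ys)" using l by simp
  next
    assume "map B ys \<in> J i (length ys)"
    then have "map B ys \<in> {l \<in> J i (length ys). set l \<subseteq> S}" using sB by simp
    then have "map f (map B ys) \<in> map f ` {l \<in> J i (length ys). set l \<subseteq> S}" by (rule imageI)
    then show "map (f \<circ> B) ys \<in> map f ` {l \<in> J i (length ys). set l \<subseteq> S}" by simp
  qed
  then show ?case by (simp only: cl_eval.simps)
next
  case (And a b)
  have "cl_eval (f ` S) (\<lambda>i n. map f ` {l \<in> J i n. set l \<subseteq> S}) (f \<circ> B) a = cl_eval S J B a"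
    by (rule And.hyps(1)[OF And.prems])
  moreover have "cl_eval (f ` S) (\<lambda>i n. map f ` {l \<in> J i n. set l \<subseteq> S}) (f \<circ> B) b = cl_eval S J B b"
    by (rule And.hyps(2)[OF And.prems])
  ultimately show ?case by (simp only: cl_eval.simps)
next
  case (Neg a)
  have "cl_eval (f ` S) (\<lambda>i n. map f ` {l \<in> J i n. set l \<subseteq> S}) (f \<circ> B) a = cl_eval S J B a"
    by (rule Neg.hyps(1)[OF Neg.prems])
  then show ?case by (simp only: cl_eval.simps)
next
  case (All x b)
  have eq: "\<And>d. d \<in> S \<Longrightarrow> cl_eval (f ` S) (\<lambda>i n. map f ` {l \<in> J i n. set l \<subseteq> S}) ((f \<circ> B)(x := f d)) b = cl_eval S J (B(x:=d)) b"
  proof -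
    fix d assume d: "d \<in> S"
    have fe: "(f \<circ> B)(x := f d) = f \<circ> (B(x:=d))" by (auto simp: fun_eq_iff)
    have "\<forall>v. (B(x:=d)) v \<in> S" using All.prems d by simp
    then have "cl_eval (f ` S) (\<lambda>i n. map f ` {l \<in> J i n. set l \<subseteq> S}) (f \<circ> (B(x:=d))) b = cl_eval S J (B(x:=d)) b"
      by (rule All.hyps)
    then show "cl_eval (f ` S) (\<lambda>i n. map f ` {l \<in> J i n. set l \<subseteq> S}) ((f \<circ> B)(x := f d)) b = cl_eval S J (B(x:=d)) b"
      by (simp only: fe)
  qed
  have "(\<forall>d'\<in>f ` S. cl_eval (f ` S) (\<lambda>i n. map f ` {l \<in> J i n. set l \<subseteq> S}) ((f \<circ> B)(x := d')) b)
      = (\<forall>d\<in>S. cl_eval (f ` S) (\<lambda>i n. map f ` {l \<in> J i n. set l \<subseteq> S}) ((f \<circ> B)(x := f d)) b)"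
    by blast
  also have "\<dots> = (\<forall>d\<in>S. cl_eval S J (B(x:=d)) b)" using eq by (simp cong: ball_cong)
  finally show ?case by (simp only: cl_eval.simps)
qed simp_all

lemma LS:
  fixes D :: "'d set"
  assumes cpl: "CPL_thm a" and D: "D \<noteq> {}" and J: "\<forall>i n. J i n \<subseteq> {l. length l = n \<and> set l \<subseteq> D}"
    and A: "\<forall>v. A v \<in> D"
  shows "cl_eval D J A a"
proof -
  obtain d0 where d0: "d0 \<in> D" using D by auto
  have rA: "range A \<subseteq> D" using A by auto
  define S where "S = (\<Union>n. Sk D J d0 A n)"
  have cS: "countable S" unfolding S_def by (rule countable_UN) (simp_all add: Sk_countable)
  define f where "f = to_nat_on S"
  have inj: "inj_on f S" unfolding f_def using cS by (rule inj_on_to_nat_on)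
  have AS: "\<forall>v. A v \<in> S"
  proof
    fix v have "A v \<in> Sk D J d0 A 0" by simp
    then show "A v \<in> S" unfolding S_def by (rule UN_I[OF UNIV_I])
  qed
  define D' where "D' = f ` S"
  define I' where "I' = (\<lambda>i n. map f ` {l \<in> J i n. set l \<subseteq> S})"
  have all: "\<forall>(D :: nat set) I A. D \<noteq> {} \<and> (\<forall>i n. I i n \<subseteq> {l. length l = n \<and> set l \<subseteq> D})
        \<and> (\<forall>v. A v \<in> D) \<longrightarrow> cl_eval D I A a" using cpl unfolding CPL_thm_def by blast
  have c1: "D' \<noteq> {}" unfolding D'_def using AS by auto
  have c2: "\<forall>i n. I' i n \<subseteq> {l. length l = n \<and> set l \<subseteq> D'}"
  proof (intro allI subsetI)
    fix i n l' assume "l' \<in> I' i n"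
    then obtain l where l: "l \<in> J i n" "set l \<subseteq> S" "l' = map f l" unfolding I'_def by blast
    have "length l = n" using l(1) J by blast
    then show "l' \<in> {l. length l = n \<and> set l \<subseteq> D'}" using l unfolding D'_def by auto
  qed
  have c3: "\<forall>v. (f \<circ> A) v \<in> D'" unfolding D'_def using AS by auto
  have "cl_eval D' I' (f \<circ> A) a" using all c1 c2 c3 by blast
  then have "cl_eval S J A a" using iso_eval[OF inj AS] unfolding D'_def I'_def by simp
  then show ?thesis using TV[OF d0 rA, where B=A and b=a and J=J] AS unfolding S_def by simp
qed


definition VS :: "mprop set \<Rightarrow> 'w itself \<Rightarrow> 'd itself \<Rightarrow> fm set" where
  "VS P W T = {a. \<forall>(C::'w set) V. nframe C V \<and> frame_has P C V \<longrightarrow> fvalid C V TYPE('d) a}"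

lemma VS_D:
  assumes "a \<in> VS P (W :: 'w itself) (T :: 'd itself)" "nframe (C :: 'w set) V" "frame_has P C V"
    "is_model C (D :: 'd set) I" "\<forall>v. A v \<in> D"
  shows "truth C V D I A a = C"
  using assms unfolding VS_def fvalid_def by blast

lemma fh_mono: "frame_has P C V \<Longrightarrow> Monotonic \<in> P \<Longrightarrow> (\<forall>c \<in> C. \<forall>X \<in> V c. \<forall>Y. X \<subseteq> Y \<and> Y \<subseteq> C \<longrightarrow> Y \<in> V c)"
  unfolding frame_has_def by simp
lemma fh_top: "frame_has P C V \<Longrightarrow> Topped \<in> P \<Longrightarrow> (\<forall>c \<in> C. C \<in> V c)"
  unfolding frame_has_def by simp
lemma fh_cufi: "frame_has P C V \<Longrightarrow> Cufi \<in> P \<Longrightarrow> (\<forall>c \<in> C. \<forall>F. finite F \<and> F \<noteq> {} \<and> F \<subseteq> V c \<longrightarrow> \<Inter>F \<in> V c)"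
  unfolding frame_has_def by simp

lemma truth_Imp: "truth C V D I A (Imp a b) = C - (truth C V D I A a - truth C V D I A b)"
  using truth_sub[of C V D I A a] by (auto simp: Imp_def)

lemma truth_Iff: "truth C V D I A (Iff a b) = C \<longleftrightarrow> truth C V D I A a = truth C V D I A b"
proof -
  let ?X = "truth C V D I A a" and ?Y = "truth C V D I A b"
  have X: "?X \<subseteq> C" and Y: "?Y \<subseteq> C" by (rule truth_sub)+
  have e: "truth C V D I A (Iff a b) = (C - (?X - ?Y)) \<inter> (C - (?Y - ?X))"
    by (simp add: Iff_def truth_Imp)
  show ?thesis unfolding e using X Y by blast
qed

lemma truth_Imp_C: "truth C V D I A (Imp a b) = C \<longleftrightarrow> truth C V D I A a \<subseteq> truth C V D I A b"
  unfolding truth_Imp using truth_sub[of C V D I A a] by blast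

lemma sound_pml: "pml (VS P (W :: 'w itself) (T :: 'd itself))"
  unfolding pml_def
proof (intro conjI allI impI)
  fix a assume cpl: "CPL_thm a"
  show "a \<in> VS P W T" unfolding VS_def fvalid_def
  proof (intro CollectI allI impI)
    fix C :: "'w set" and V and D :: "'d set" and I and A :: "nat \<Rightarrow> 'd"
    assume "nframe C V \<and> frame_has P C V" and m: "is_model C D I \<and> (\<forall>v. A v \<in> D)"
    have bf: "box_free a" using cpl unfolding CPL_thm_def by (rule conjunct1)
    have "C \<subseteq> truth C V D I A a"
    proof
      fix c assume c: "c \<in> C"
      have "cl_eval D (I c) A a"
        by (rule LS[OF cpl]) (use m c in \<open>auto simp: is_model_def\<close>)
      then show "c \<in> truth C V D I A a" using truth_box_free[OF bf c, where V=V and D=D and I=I and A=A] by simp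
    qed
    then show "truth C V D I A a = C" using truth_sub[of C V D I A a] by blast
  qed
next
  fix \<sigma> a assume h: "a \<in> VS P W T \<and> psfree \<sigma> a"
  show "psubst \<sigma> a \<in> VS P W T" unfolding VS_def fvalid_def
  proof (intro CollectI allI impI)
    fix C :: "'w set" and V and D :: "'d set" and I and A :: "nat \<Rightarrow> 'd"
    assume fr: "nframe C V \<and> frame_has P C V" and m: "is_model C D I \<and> (\<forall>v. A v \<in> D)"
    have "truth C V D I A (psubst \<sigma> a) = truth C V D (Isub C V D I A \<sigma>) A a"
      by (rule truth_psubst[where Bs="{}"]) (use h m in \<open>auto simp: psfree_def\<close>)
    also have "\<dots> = C"
      using h fr m is_model_Isub[of C D I V A \<sigma>] by (intro VS_D[of a P W T]) auto
    finally show "truth C V D I A (psubst \<sigma> a) = C" .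
  qed
next
  fix a b assume h: "a \<in> VS P W T \<and> Imp a b \<in> VS P W T"
  show "b \<in> VS P W T" unfolding VS_def fvalid_def
  proof (intro CollectI allI impI)
    fix C :: "'w set" and V and D :: "'d set" and I and A :: "nat \<Rightarrow> 'd"
    assume fr: "nframe C V \<and> frame_has P C V" and m: "is_model C D I \<and> (\<forall>v. A v \<in> D)"
    have 1: "truth C V D I A a = C" using h fr m by (intro VS_D[of a P W T]) auto
    have 2: "truth C V D I A (Imp a b) = C" using h fr m by (intro VS_D[of "Imp a b" P W T]) auto
    show "truth C V D I A b = C" using 1 2 truth_sub[of C V D I A b] unfolding truth_Imp by blast
  qed
next
  fix x a assume h: "a \<in> VS P W T"
  show "All x a \<in> VS P W T" unfolding VS_def fvalid_def
  proof (intro CollectI allI impI)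
    fix C :: "'w set" and V and D :: "'d set" and I and A :: "nat \<Rightarrow> 'd"
    assume fr: "nframe C V \<and> frame_has P C V" and m: "is_model C D I \<and> (\<forall>v. A v \<in> D)"
    have "\<And>d. d \<in> D \<Longrightarrow> truth C V D I (A(x:=d)) a = C"
    proof -
      fix d assume "d \<in> D"
      then have "is_model C D I \<and> (\<forall>v. (A(x:=d)) v \<in> D)" using m by simp
      then show "truth C V D I (A(x:=d)) a = C" using h fr by (intro VS_D[of a P W T]) auto
    qed
    then show "truth C V D I A (All x a) = C" by (auto simp del: fun_upd_apply)
  qed
next
  fix a b assume h: "Iff a b \<in> VS P W T"
  show "Iff (Box a) (Box b) \<in> VS P W T" unfolding VS_def fvalid_def
  proof (intro CollectI allI impI)
    fix C :: "'w set" and V and D :: "'d set" and I and A :: "nat \<Rightarrow> 'd"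
    assume fr: "nframe C V \<and> frame_has P C V" and m: "is_model C D I \<and> (\<forall>v. A v \<in> D)"
    have "truth C V D I A (Iff a b) = C" using h fr m by (intro VS_D[of "Iff a b" P W T]) auto
    then have "truth C V D I A a = truth C V D I A b" by (simp only: truth_Iff)
    then have "truth C V D I A (Box a) = truth C V D I A (Box b)" by simp
    then show "truth C V D I A (Iff (Box a) (Box b)) = C" by (simp only: truth_Iff)
  qed
qed

lemma sound_axioms: "logic_has P (VS P (W :: 'w itself) (T :: 'd itself))"
  unfolding logic_has_def
proof (intro conjI impI)
  assume MP: "Monotonic \<in> P"
  show "axM \<in> VS P W T" unfolding VS_def fvalid_def
  proof (intro CollectI allI impI)
    fix C :: "'w set" and V and D :: "'d set" and I and A :: "nat \<Rightarrow> 'd"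
    assume fr: "nframe C V \<and> frame_has P C V" and m: "is_model C D I \<and> (\<forall>v. A v \<in> D)"
    have mono: "\<forall>c \<in> C. \<forall>X \<in> V c. \<forall>Y. X \<subseteq> Y \<and> Y \<subseteq> C \<longrightarrow> Y \<in> V c"
      using fh_mono[OF conjunct2[OF fr] MP] .
    let ?X = "{c \<in> C. [] \<in> I c 0 0}" and ?Y = "{c \<in> C. [] \<in> I c 1 0}"
    have "\<And>c. c \<in> C \<Longrightarrow> ?X \<inter> ?Y \<in> V c \<Longrightarrow> ?X \<in> V c \<and> ?Y \<in> V c"
    proof -
      fix c assume c: "c \<in> C" and xy: "?X \<inter> ?Y \<in> V c"
      have m1: "\<forall>Z. ?X \<inter> ?Y \<subseteq> Z \<and> Z \<subseteq> C \<longrightarrow> Z \<in> V c" using mono c xy by blast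
      have "?X \<inter> ?Y \<subseteq> ?X \<and> ?X \<subseteq> C" by blast
      moreover have "?X \<inter> ?Y \<subseteq> ?Y \<and> ?Y \<subseteq> C" by blast
      ultimately show "?X \<in> V c \<and> ?Y \<in> V c" using m1 by blast
    qed
    then show "truth C V D I A axM = C" unfolding axM_def truth_Imp_C pp_def qq_def by auto
  qed
next
  assume TP: "Topped \<in> P"
  show "axN \<in> VS P W T" unfolding VS_def fvalid_def
  proof (intro CollectI allI impI)
    fix C :: "'w set" and V and D :: "'d set" and I and A :: "nat \<Rightarrow> 'd"
    assume fr: "nframe C V \<and> frame_has P C V" and m: "is_model C D I \<and> (\<forall>v. A v \<in> D)"
    have "\<forall>c \<in> C. C \<in> V c" using fh_top[OF conjunct2[OF fr] TP] .
    then show "truth C V D I A axN = C" unfolding axN_def by auto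
  qed
next
  assume CP: "Cufi \<in> P"
  show "axC \<in> VS P W T" unfolding VS_def fvalid_def
  proof (intro CollectI allI impI)
    fix C :: "'w set" and V and D :: "'d set" and I and A :: "nat \<Rightarrow> 'd"
    assume fr: "nframe C V \<and> frame_has P C V" and m: "is_model C D I \<and> (\<forall>v. A v \<in> D)"
    have cf: "\<forall>c \<in> C. \<forall>F. finite F \<and> F \<noteq> {} \<and> F \<subseteq> V c \<longrightarrow> \<Inter>F \<in> V c"
      using fh_cufi[OF conjunct2[OF fr] CP] .
    let ?X = "{c \<in> C. [] \<in> I c 0 0}" and ?Y = "{c \<in> C. [] \<in> I c 1 0}"
    have "\<And>c. c \<in> C \<Longrightarrow> ?X \<in> V c \<Longrightarrow> ?Y \<in> V c \<Longrightarrow> ?X \<inter> ?Y \<in> V c"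
    proof -
      fix c assume c: "c \<in> C" and xy: "?X \<in> V c" "?Y \<in> V c"
      have "finite {?X, ?Y} \<and> {?X, ?Y} \<noteq> {} \<and> {?X, ?Y} \<subseteq> V c" using xy by simp
      then have "\<Inter>{?X, ?Y} \<in> V c" using cf c by blast
      then show "?X \<inter> ?Y \<in> V c" by simp
    qed
    then show "truth C V D I A axC = C" unfolding axC_def truth_Imp_C pp_def qq_def by auto
  qed
qed

lemma soundness:
  assumes "\<phi> \<in> LP P" "nframe (C :: 'w set) V" "frame_has P C V"
  shows "fvalid C V TYPE('d) \<phi>"
proof -
  have "LP P \<subseteq> VS P TYPE('w) TYPE('d)"
    unfolding LP_def by (rule Inter_lower) (simp add: sound_pml sound_axioms)
  then have "\<phi> \<in> VS P TYPE('w) TYPE('d)" using assms(1) by blast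
  then have "\<forall>(C :: 'w set) V. nframe C V \<and> frame_has P C V \<longrightarrow> fvalid C V TYPE('d) \<phi>"
    unfolding VS_def by simp
  then show ?thesis using assms(2,3) by blast
qed


section \<open>Propositional toolkit\<close>

fun peval :: "(fm \<Rightarrow> bool) \<Rightarrow> fm \<Rightarrow> bool" where
  "peval v Top = True"
| "peval v Bot = False"
| "peval v (And a b) = (peval v a \<and> peval v b)"
| "peval v (Neg a) = (\<not> peval v a)"
| "peval v (Atom i ys) = v (Atom i ys)"
| "peval v (All x a) = v (All x a)"
| "peval v (Box a) = v (Box a)"

fun pabs :: "fm \<Rightarrow> fm" where
  "pabs Top = Top"
| "pabs Bot = Bot"
| "pabs (And a b) = And (pabs a) (pabs b)"
| "pabs (Neg a) = Neg (pabs a)"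
| "pabs (Atom i ys) = Atom (to_nat (Atom i ys)) []"
| "pabs (All x a) = Atom (to_nat (All x a)) []"
| "pabs (Box a) = Atom (to_nat (Box a)) []"

definition psig :: psub where "psig i n = ([], from_nat i)"

lemma psubst_pabs: "psubst psig (pabs a) = a"
  by (induct a) (simp_all add: psig_def)

lemma psfree_pabs: "psfree_aux {} psig (pabs a)"
  by (induct a) (simp_all add: psig_def)

lemma box_free_pabs: "box_free (pabs a)"
  by (induct a) simp_all

lemma cl_eval_pabs: "cl_eval D I A (pabs a) = peval (\<lambda>b. [] \<in> I (to_nat b) 0) a"
  by (induct a) simp_all

lemma pml_CPL: "pml L \<Longrightarrow> CPL_thm a \<Longrightarrow> a \<in> L"
  unfolding pml_def by blast
lemma pml_subst: "pml L \<Longrightarrow> a \<in> L \<Longrightarrow> psfree \<sigma> a \<Longrightarrow> psubst \<sigma> a \<in> L"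
  unfolding pml_def by blast
lemma pml_MP: "pml L \<Longrightarrow> a \<in> L \<Longrightarrow> Imp a b \<in> L \<Longrightarrow> b \<in> L"
  unfolding pml_def by blast
lemma pml_Gen: "pml L \<Longrightarrow> a \<in> L \<Longrightarrow> All x a \<in> L"
  unfolding pml_def by blast
lemma pml_RE: "pml L \<Longrightarrow> Iff a b \<in> L \<Longrightarrow> Iff (Box a) (Box b) \<in> L"
  unfolding pml_def by blast

lemma taut:
  assumes L: "pml L" and t: "\<And>v. peval v a"
  shows "a \<in> L"
proof -
  have "CPL_thm (pabs a)" unfolding CPL_thm_def
    using t by (simp add: box_free_pabs cl_eval_pabs)
  then have "pabs a \<in> L" by (rule pml_CPL[OF L])
  then have "psubst psig (pabs a) \<in> L"
    by (rule pml_subst[OF L]) (simp add: psfree_def psfree_pabs)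
  then show ?thesis by (simp add: psubst_pabs)
qed

lemma peval_Imp[simp]: "peval v (Imp a b) = (peval v a \<longrightarrow> peval v b)"
  by (simp add: Imp_def)
lemma peval_Iff[simp]: "peval v (Iff a b) = (peval v a \<longleftrightarrow> peval v b)"
  by (auto simp add: Iff_def)

fun conjl :: "fm list \<Rightarrow> fm" where
  "conjl [] = Top"
| "conjl (a # as) = And a (conjl as)"

lemma peval_conjl[simp]: "peval v (conjl as) = (\<forall>a\<in>set as. peval v a)"
  by (induct as) auto

lemma fv_conjl: "fv (conjl as) = (\<Union>a\<in>set as. fv a)"
  by (induct as) auto

lemma conjl_in: "pml L \<Longrightarrow> set as \<subseteq> L \<Longrightarrow> conjl as \<in> L"
proof (induct as)
  case Nil then show ?case by (simp add: taut)
next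
  case (Cons a as)
  have a: "a \<in> L" and c: "conjl as \<in> L" using Cons by auto
  have "Imp a (Imp (conjl as) (And a (conjl as))) \<in> L" by (rule taut[OF Cons.prems(1)]) simp
  then have "Imp (conjl as) (And a (conjl as)) \<in> L" by (rule pml_MP[OF Cons.prems(1) a])
  then show ?case using pml_MP[OF Cons.prems(1) c] by simp
qed

lemma conseq:
  assumes L: "pml L" and as: "set as \<subseteq> L" and t: "\<And>v. (\<forall>a\<in>set as. peval v a) \<Longrightarrow> peval v b"
  shows "b \<in> L"
proof -
  have "Imp (conjl as) b \<in> L" by (rule taut[OF L]) (simp add: t)
  then show ?thesis by (rule pml_MP[OF L conjl_in[OF L as]])
qed

definition cons :: "fm set \<Rightarrow> fm set \<Rightarrow> bool" where
  "cons L G \<longleftrightarrow> (\<forall>gs. set gs \<subseteq> G \<longrightarrow> Neg (conjl gs) \<notin> L)"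

definition mcs :: "fm set \<Rightarrow> fm set \<Rightarrow> bool" where
  "mcs L G \<longleftrightarrow> cons L G \<and> (\<forall>a. a \<in> G \<or> Neg a \<in> G)"

lemma cons_mono: "G \<subseteq> H \<Longrightarrow> cons L H \<Longrightarrow> cons L G"
  unfolding cons_def by blast

lemma consD: "cons L G \<Longrightarrow> set gs \<subseteq> G \<Longrightarrow> Neg (conjl gs) \<in> L \<Longrightarrow> False"
  unfolding cons_def by blast

lemma cons_split:
  assumes L: "pml L" and c: "cons L G"
  shows "cons L (insert a G) \<or> cons L (insert (Neg a) G)"
proof (rule ccontr)
  assume "\<not> (cons L (insert a G) \<or> cons L (insert (Neg a) G))"
  then obtain gs1 gs2 where g1: "set gs1 \<subseteq> insert a G" "Neg (conjl gs1) \<in> L"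
    and g2: "set gs2 \<subseteq> insert (Neg a) G" "Neg (conjl gs2) \<in> L"
    unfolding cons_def by blast
  let ?hs = "filter (\<lambda>g. g \<noteq> a) gs1 @ filter (\<lambda>g. g \<noteq> Neg a) gs2"
  have hs: "set ?hs \<subseteq> G" using g1(1) g2(1) by auto
  have "Neg (conjl ?hs) \<in> L"
  proof (rule conseq[OF L, of "[Neg (conjl gs1), Neg (conjl gs2)]"])
    show "set [Neg (conjl gs1), Neg (conjl gs2)] \<subseteq> L" using g1 g2 by simp
  next
    fix v assume "\<forall>b\<in>set [Neg (conjl gs1), Neg (conjl gs2)]. peval v b"
    then have n1: "\<not> (\<forall>g\<in>set gs1. peval v g)" and n2: "\<not> (\<forall>g\<in>set gs2. peval v g)" by simp_all
    show "peval v (Neg (conjl ?hs))"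
    proof (cases "peval v a")
      case True
      then show ?thesis using n1 by auto
    next
      case False
      then show ?thesis using n2 by auto
    qed
  qed
  then show False using consD[OF c hs] by blast
qed

lemma mcs_conseq:
  assumes L: "pml L" and w: "mcs L w" and as: "set as \<subseteq> w"
    and t: "\<And>v. (\<forall>a\<in>set as. peval v a) \<Longrightarrow> peval v b"
  shows "b \<in> w"
proof (rule ccontr)
  assume "b \<notin> w"
  then have nb: "Neg b \<in> w" using w unfolding mcs_def by blast
  have "Neg (conjl (Neg b # as)) \<in> L" by (rule taut[OF L]) (use t in auto)
  moreover have "set (Neg b # as) \<subseteq> w" using nb as by simp
  ultimately show False using consD w unfolding mcs_def by blast
qed

lemma mcs_L: "pml L \<Longrightarrow> mcs L w \<Longrightarrow> a \<in> L \<Longrightarrow> a \<in> w"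
proof -
  assume L: "pml L" and w: "mcs L w" and a: "a \<in> L"
  show "a \<in> w"
  proof (rule ccontr)
    assume "a \<notin> w"
    then have na: "Neg a \<in> w" using w unfolding mcs_def by blast
    have "Neg (conjl [Neg a]) \<in> L" by (rule conseq[OF L, of "[a]"]) (use a in auto)
    moreover have "set [Neg a] \<subseteq> w" using na by simp
    ultimately show False using consD w unfolding mcs_def by blast
  qed
qed

lemma mcs_MP: "pml L \<Longrightarrow> mcs L w \<Longrightarrow> a \<in> w \<Longrightarrow> Imp a b \<in> L \<Longrightarrow> b \<in> w"
proof -
  assume L: "pml L" and w: "mcs L w" and a: "a \<in> w" and ab: "Imp a b \<in> L"
  have iw: "Imp a b \<in> w" by (rule mcs_L[OF L w ab])
  show "b \<in> w" by (rule mcs_conseq[OF L w, of "[a, Imp a b]"]) (use a iw in auto)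
qed

lemma mcs_Neg: "pml L \<Longrightarrow> mcs L w \<Longrightarrow> (Neg a \<in> w) = (a \<notin> w)"
proof -
  assume L: "pml L" and w: "mcs L w"
  have "\<not> (a \<in> w \<and> Neg a \<in> w)"
  proof
    assume h: "a \<in> w \<and> Neg a \<in> w"
    have "Neg (conjl [a, Neg a]) \<in> L" by (rule taut[OF L]) simp
    moreover have "set [a, Neg a] \<subseteq> w" using h by simp
    ultimately show False using consD w unfolding mcs_def by blast
  qed
  moreover have "a \<in> w \<or> Neg a \<in> w" using w unfolding mcs_def by blast
  ultimately show ?thesis by blast
qed

lemma mcs_And: "pml L \<Longrightarrow> mcs L w \<Longrightarrow> (And a b \<in> w) = (a \<in> w \<and> b \<in> w)"
proof -
  assume L: "pml L" and w: "mcs L w"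
  show ?thesis
  proof
    assume h: "And a b \<in> w"
    have "a \<in> w" by (rule mcs_conseq[OF L w, of "[And a b]"]) (use h in auto)
    moreover have "b \<in> w" by (rule mcs_conseq[OF L w, of "[And a b]"]) (use h in auto)
    ultimately show "a \<in> w \<and> b \<in> w" by blast
  next
    assume h: "a \<in> w \<and> b \<in> w"
    show "And a b \<in> w" by (rule mcs_conseq[OF L w, of "[a, b]"]) (use h in auto)
  qed
qed

lemma mcs_Top: "pml L \<Longrightarrow> mcs L w \<Longrightarrow> Top \<in> w"
  by (rule mcs_L) (auto intro: taut)


lemma gen_scheme:
  assumes L: "pml L" and e1: "e \<notin> fv p" and e2: "e \<notin> allv \<theta>"
  shows "Imp (All e (Imp p (vsubst (id(x:=e)) \<theta>))) (Imp p (All x \<theta>)) \<in> L"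
proof -
  let ?S = "Imp (All e (Imp (Atom 1 []) (Atom 0 [e]))) (Imp (Atom 1 []) (All x (Atom 0 [x])))"
  define \<sigma> :: psub where "\<sigma> = (\<lambda>i n. if i = 0 \<and> n = 1 then ([x], \<theta>) else ([], p))"
  have "CPL_thm ?S" unfolding CPL_thm_def Imp_def by auto
  then have "?S \<in> L" by (rule pml_CPL[OF L])
  moreover have "psfree \<sigma> ?S"
  proof -
    have vf: "vfree (id(x:=e)) \<theta>" by (rule vfree_crit) (use e2 in \<open>auto simp: allv_def\<close>)
    have "(fv \<theta> - {x}) \<inter> {e} = {}" using e2 by (auto simp: allv_def)
    moreover have "fv p \<inter> {e} = {}" using e1 by auto
    ultimately show ?thesis unfolding psfree_def Imp_def \<sigma>_def using vf by simp
  qed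
  ultimately have "psubst \<sigma> ?S \<in> L" by (rule pml_subst[OF L])
  moreover have "psubst \<sigma> ?S = Imp (All e (Imp p (vsubst (id(x:=e)) \<theta>))) (Imp p (All x \<theta>))"
    by (simp add: \<sigma>_def Imp_def)
  ultimately show ?thesis by simp
qed

lemma inst_scheme_vf:
  assumes L: "pml L" and vf: "vfree (id(x:=d)) \<theta>"
  shows "Imp (All x \<theta>) (vsubst (id(x:=d)) \<theta>) \<in> L"
proof -
  let ?S = "Imp (All x (Atom 0 [x])) (Atom 0 [d])"
  define \<sigma> :: psub where "\<sigma> = (\<lambda>i n. ([x], \<theta>))"
  have "CPL_thm ?S" unfolding CPL_thm_def Imp_def by auto
  then have "?S \<in> L" by (rule pml_CPL[OF L])
  moreover have "psfree \<sigma> ?S"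
  proof -
    show ?thesis unfolding psfree_def Imp_def \<sigma>_def using vf by simp
  qed
  ultimately have "psubst \<sigma> ?S \<in> L" by (rule pml_subst[OF L])
  moreover have "psubst \<sigma> ?S = Imp (All x \<theta>) (vsubst (id(x:=d)) \<theta>)"
    by (simp add: \<sigma>_def Imp_def)
  ultimately show ?thesis by simp
qed

lemma inst_scheme:
  assumes L: "pml L" and d: "d \<notin> bv \<theta>"
  shows "Imp (All x \<theta>) (vsubst (id(x:=d)) \<theta>) \<in> L"
proof -
  have vf: "vfree (id(x:=d)) \<theta>" by (rule vfree_crit) (use d in auto)
  show ?thesis by (rule inst_scheme_vf[OF L vf])
qed

lemma axM_inst:
  assumes L: "pml L" and M: "axM \<in> L"
  shows "Imp (Box (And a b)) (And (Box a) (Box b)) \<in> L"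
proof -
  define \<sigma> :: psub where "\<sigma> = (\<lambda>i n. if i = 0 then ([], a) else ([], b))"
  have "psfree \<sigma> axM" unfolding psfree_def axM_def pp_def qq_def Imp_def \<sigma>_def by simp
  then have "psubst \<sigma> axM \<in> L" by (rule pml_subst[OF L M])
  moreover have "psubst \<sigma> axM = Imp (Box (And a b)) (And (Box a) (Box b))"
    by (simp add: \<sigma>_def Imp_def axM_def pp_def qq_def)
  ultimately show ?thesis by simp
qed

lemma axC_inst:
  assumes L: "pml L" and C: "axC \<in> L"
  shows "Imp (And (Box a) (Box b)) (Box (And a b)) \<in> L"
proof -
  define \<sigma> :: psub where "\<sigma> = (\<lambda>i n. if i = 0 then ([], a) else ([], b))"
  have "psfree \<sigma> axC" unfolding psfree_def axC_def pp_def qq_def Imp_def \<sigma>_def by simp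
  then have "psubst \<sigma> axC \<in> L" by (rule pml_subst[OF L C])
  moreover have "psubst \<sigma> axC = Imp (And (Box a) (Box b)) (Box (And a b))"
    by (simp add: \<sigma>_def Imp_def axC_def pp_def qq_def)
  ultimately show ?thesis by simp
qed

lemma allv_conjl: "fv (conjl as) \<subseteq> (\<Union>a\<in>set as. allv a)"
  by (induct as) (auto simp: allv_def)

lemma witness_cons:
  assumes L: "pml L" and c: "cons L (insert (Neg (All x \<theta>)) G)"
    and e: "e \<notin> (\<Union>g\<in>insert (Neg (All x \<theta>)) G. allv g)"
  shows "cons L (insert (Neg (vsubst (id(x:=e)) \<theta>)) (insert (Neg (All x \<theta>)) G))"
  unfolding cons_def
proof (intro allI impI notI)
  fix gs
  assume gs: "set gs \<subseteq> insert (Neg (vsubst (id(x:=e)) \<theta>)) (insert (Neg (All x \<theta>)) G)"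
    and n: "Neg (conjl gs) \<in> L"
  let ?te = "vsubst (id(x:=e)) \<theta>"
  let ?hs = "filter (\<lambda>g. g \<noteq> Neg ?te) gs"
  have hs: "set ?hs \<subseteq> insert (Neg (All x \<theta>)) G" using gs by auto
  have 1: "Imp (conjl ?hs) ?te \<in> L"
    by (rule conseq[OF L, of "[Neg (conjl gs)]"]) (use n in auto)
  have 2: "All e (Imp (conjl ?hs) ?te) \<in> L" by (rule pml_Gen[OF L 1])
  have "(\<Union>a\<in>set ?hs. allv a) \<subseteq> (\<Union>g\<in>insert (Neg (All x \<theta>)) G. allv g)"
    by (rule UN_mono[OF hs order_refl])
  then have efv: "e \<notin> fv (conjl ?hs)" using allv_conjl[of ?hs] e by blast
  have eth: "e \<notin> allv \<theta>" using e by (auto simp: allv_def)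
  have 3: "Imp (conjl ?hs) (All x \<theta>) \<in> L"
    by (rule pml_MP[OF L 2 gen_scheme[OF L efv eth]])
  have "Neg (conjl (Neg (All x \<theta>) # ?hs)) \<in> L"
    by (rule conseq[OF L, of "[Imp (conjl ?hs) (All x \<theta>)]"]) (use 3 in auto)
  moreover have "set (Neg (All x \<theta>) # ?hs) \<subseteq> insert (Neg (All x \<theta>)) G" using hs by simp
  ultimately show False by (intro consD[OF c, of "Neg (All x \<theta>) # ?hs"])
qed

section \<open>Lindenbaum\<close>

definition fresh :: "nat set \<Rightarrow> fm set \<Rightarrow> fm \<Rightarrow> nat" where
  "fresh E G f = (SOME e. e \<in> E \<and> e \<notin> (\<Union>g\<in>insert f G. allv g))"

fun witf :: "nat \<Rightarrow> fm \<Rightarrow> fm set" where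
  "witf e (Neg (All x \<theta>)) = {Neg (vsubst (id(x:=e)) \<theta>)}"
| "witf e _ = {}"

lemma witf_cases: "witf e f = {} \<or> (\<exists>x \<theta>. f = Neg (All x \<theta>) \<and> witf e f = {Neg (vsubst (id(x:=e)) \<theta>)})"
proof (cases "\<exists>x \<theta>. f = Neg (All x \<theta>)")
  case True
  then obtain x \<theta> where f: "f = Neg (All x \<theta>)" by blast
  have "witf e f = {Neg (vsubst (id(x:=e)) \<theta>)}" unfolding f by (simp only: witf.simps)
  then show ?thesis using f by blast
next
  case False
  then have "witf e f = {}" by (induct e f rule: witf.induct) simp_all
  then show ?thesis by blast
qed

lemma finite_witf: "finite (witf e f)"
  by (induct e f rule: witf.induct) simp_all

definition ext :: "fm set \<Rightarrow> nat set \<Rightarrow> fm set \<Rightarrow> nat \<Rightarrow> fm set" where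
  "ext L E G n = (if cons L (insert (from_nat n) G)
     then witf (fresh E G (from_nat n)) (from_nat n) \<union> insert (from_nat n) G else G)"

primrec chain :: "fm set \<Rightarrow> nat set \<Rightarrow> fm set \<Rightarrow> nat \<Rightarrow> fm set" where
  "chain L E G0 0 = G0"
| "chain L E G0 (Suc n) = ext L E (chain L E G0 n) n"

definition lind :: "fm set \<Rightarrow> nat set \<Rightarrow> fm set \<Rightarrow> fm set" where
  "lind L E G0 = (\<Union>n. chain L E G0 n)"

lemma fresh_prop:
  assumes "infinite E" "finite G"
  shows "fresh E G f \<in> E \<and> fresh E G f \<notin> (\<Union>g\<in>insert f G. allv g)"
proof -
  have "finite (\<Union>g\<in>insert f G. allv g)" using assms(2) by simp
  then have "infinite (E - (\<Union>g\<in>insert f G. allv g))" using assms(1) by (rule Diff_infinite_finite)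
  then have "E - (\<Union>g\<in>insert f G. allv g) \<noteq> {}" by (rule infinite_imp_nonempty)
  then obtain e where "e \<in> E - (\<Union>g\<in>insert f G. allv g)" by blast
  then have "\<exists>e. e \<in> E \<and> e \<notin> (\<Union>g\<in>insert f G. allv g)" by blast
  then show ?thesis unfolding fresh_def by (rule someI_ex)
qed

lemma ext_sup: "G \<subseteq> ext L E G n"
  unfolding ext_def by auto

lemma chain_finite: "finite G0 \<Longrightarrow> finite (chain L E G0 n)"
  by (induct n) (auto simp: ext_def finite_witf)

lemma chain_mono: "m \<le> n \<Longrightarrow> chain L E G0 m \<subseteq> chain L E G0 n"
  by (rule lift_Suc_mono_le[where f="chain L E G0"]) (auto simp: ext_sup)

lemma chain_cons:
  assumes L: "pml L" and E: "infinite E" and f0: "finite G0" and c0: "cons L G0"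
  shows "cons L (chain L E G0 n)"
proof (induct n)
  case 0 then show ?case using c0 by simp
next
  case (Suc n)
  let ?G = "chain L E G0 n" and ?f = "from_nat n :: fm"
  show ?case
  proof (cases "cons L (insert ?f ?G)")
    case False
    then show ?thesis using Suc by (simp add: ext_def)
  next
    case True
    let ?e = "fresh E ?G ?f"
    have fe: "?e \<notin> (\<Union>g\<in>insert ?f ?G. allv g)"
      using fresh_prop[OF E chain_finite[OF f0, of L E n], of ?f] by blast
    from witf_cases[of ?e ?f] show ?thesis
    proof
      assume "witf ?e ?f = {}"
      then show ?thesis using True by (simp add: ext_def)
    next
      assume "\<exists>x \<theta>. ?f = Neg (All x \<theta>) \<and> witf ?e ?f = {Neg (vsubst (id(x:=?e)) \<theta>)}"
      then obtain x \<theta> where f: "?f = Neg (All x \<theta>)" and w: "witf ?e ?f = {Neg (vsubst (id(x:=?e)) \<theta>)}"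
        by blast
      have "cons L (insert (Neg (vsubst (id(x:=?e)) \<theta>)) (insert (Neg (All x \<theta>)) ?G))"
        by (rule witness_cons[OF L]) (use True fe f in simp_all)
      then show ?thesis using True w f by (simp add: ext_def insert_commute)
    qed
  qed
qed

lemma list_in_chain: "set l \<subseteq> (\<Union>n. chain L E G0 n) \<Longrightarrow> \<exists>n. set l \<subseteq> chain L E G0 n"
proof (induct l)
  case Nil then show ?case by simp
next
  case (Cons a l)
  then obtain n where n: "set l \<subseteq> chain L E G0 n" by auto
  obtain m where m: "a \<in> chain L E G0 m" using Cons.prems by auto
  have "set (a # l) \<subseteq> chain L E G0 (max n m)"
    using n m chain_mono[of n "max n m" L E G0] chain_mono[of m "max n m" L E G0] by auto
  then show ?case by blast
qed

lemma lind_cons: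
  assumes L: "pml L" and E: "infinite E" and f0: "finite G0" and c0: "cons L G0"
  shows "cons L (lind L E G0)"
  unfolding cons_def
proof (intro allI impI)
  fix gs assume "set gs \<subseteq> lind L E G0"
  then have "\<exists>n. set gs \<subseteq> chain L E G0 n" unfolding lind_def by (rule list_in_chain)
  then obtain n where "set gs \<subseteq> chain L E G0 n" by (elim exE)
  then show "Neg (conjl gs) \<notin> L" using chain_cons[OF L E f0 c0, of n] unfolding cons_def by blast
qed

lemma chain_lind: "chain L E G0 n \<subseteq> lind L E G0"
  unfolding lind_def by blast

lemma lind_step:
  assumes "cons L (insert (from_nat n) (chain L E G0 n))"
  shows "from_nat n \<in> lind L E G0"
proof -
  have "from_nat n \<in> chain L E G0 (Suc n)" using assms by (simp add: ext_def)
  then show ?thesis using chain_lind[of L E G0 "Suc n"] by blast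
qed

lemma lind_mcs:
  assumes L: "pml L" and E: "infinite E" and f0: "finite G0" and c0: "cons L G0"
  shows "mcs L (lind L E G0)"
  unfolding mcs_def
proof (intro conjI allI)
  show c: "cons L (lind L E G0)" by (rule lind_cons[OF assms])
  fix a
  show "a \<in> lind L E G0 \<or> Neg a \<in> lind L E G0"
  proof (rule ccontr)
    assume h: "\<not> (a \<in> lind L E G0 \<or> Neg a \<in> lind L E G0)"
    let ?n = "to_nat a" and ?m = "to_nat (Neg a)"
    have 1: "\<not> cons L (insert a (chain L E G0 ?n))"
      using lind_step[of L ?n E G0] h by auto
    have 2: "\<not> cons L (insert (Neg a) (chain L E G0 ?m))"
      using lind_step[of L ?m E G0] h by auto
    let ?k = "max ?n ?m"
    have "\<not> cons L (insert a (chain L E G0 ?k))"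
      using 1 cons_mono[of "insert a (chain L E G0 ?n)" "insert a (chain L E G0 ?k)" L]
        chain_mono[of ?n ?k L E G0] by auto
    moreover have "\<not> cons L (insert (Neg a) (chain L E G0 ?k))"
      using 2 cons_mono[of "insert (Neg a) (chain L E G0 ?m)" "insert (Neg a) (chain L E G0 ?k)" L]
        chain_mono[of ?m ?k L E G0] by auto
    ultimately show False using cons_split[OF L chain_cons[OF assms, of ?k], of a] by blast
  qed
qed

lemma lind_wit:
  assumes L: "pml L" and E: "infinite E" and f0: "finite G0" and c0: "cons L G0"
    and h: "Neg (All x \<theta>) \<in> lind L E G0"
  shows "\<exists>e\<in>E. Neg (vsubst (id(x:=e)) \<theta>) \<in> lind L E G0"
proof -
  let ?f = "Neg (All x \<theta>)"
  let ?n = "to_nat ?f"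
  let ?G = "chain L E G0 ?n"
  have "insert ?f ?G \<subseteq> lind L E G0" using h chain_lind[of L E G0 ?n] by blast
  then have c: "cons L (insert ?f ?G)" using lind_cons[OF L E f0 c0] by (rule cons_mono)
  let ?e = "fresh E ?G ?f"
  have eE: "?e \<in> E" using fresh_prop[OF E chain_finite[OF f0, of L E ?n], of ?f] by blast
  have "Neg (vsubst (id(x:=?e)) \<theta>) \<in> chain L E G0 (Suc ?n)" using c by (simp add: ext_def)
  then show ?thesis using eE chain_lind[of L E G0 "Suc ?n"] by blast
qed

lemma lind_sup: "G0 \<subseteq> lind L E G0"
  using chain_lind[of L E G0 0] by simp


section \<open>Canonical model\<close>

definition Wr :: "fm set \<Rightarrow> nat set \<Rightarrow> fm set set" where
  "Wr L E = {w. mcs L w \<and> (\<forall>x \<theta>. Neg (All x \<theta>) \<in> w \<longrightarrow> (\<exists>e\<in>E. Neg (vsubst (id(x:=e)) \<theta>) \<in> w))}"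

definition prfs :: "fm set \<Rightarrow> nat set \<Rightarrow> fm \<Rightarrow> fm set set" where
  "prfs L E a = {w \<in> Wr L E. a \<in> w}"

definition VV :: "mprop set \<Rightarrow> fm set \<Rightarrow> nat set \<Rightarrow> fm set \<Rightarrow> fm set set set" where
  "VV P L E w = (if Monotonic \<in> P then {X. X \<subseteq> Wr L E \<and> (\<exists>c. Box c \<in> w \<and> prfs L E c \<subseteq> X)}
     else {X. \<exists>c. Box c \<in> w \<and> X = prfs L E c})"

definition II :: "nat set \<Rightarrow> fm set \<Rightarrow> nat \<Rightarrow> nat \<Rightarrow> nat list set" where
  "II E w i n = {l. length l = n \<and> set l \<subseteq> E \<and> Atom i l \<in> w}"

lemma prfs_sub: "prfs L E a \<subseteq> Wr L E"
  unfolding prfs_def by blast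

lemma Wr_mcs: "w \<in> Wr L E \<Longrightarrow> mcs L w"
  unfolding Wr_def by blast

lemma exists_world:
  assumes L: "pml L" and E: "infinite E" and na: "Neg a \<notin> L"
  shows "\<exists>w\<in>Wr L E. a \<in> w"
proof -
  have c: "cons L {a}" unfolding cons_def
  proof (intro allI impI notI)
    fix gs assume gs: "set gs \<subseteq> {a}" and n: "Neg (conjl gs) \<in> L"
    have "Neg a \<in> L"
    proof (rule conseq[OF L, of "[Neg (conjl gs)]"])
      show "set [Neg (conjl gs)] \<subseteq> L" using n by simp
    next
      fix v assume "\<forall>b\<in>set [Neg (conjl gs)]. peval v b"
      then have "\<not> (\<forall>g\<in>set gs. peval v g)" by simp
      then obtain g where "g \<in> set gs" "\<not> peval v g" by blast
      then show "peval v (Neg a)" using gs by auto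
    qed
    then show False using na by blast
  qed
  have f: "finite {a}" by simp
  let ?w = "lind L E {a}"
  have m: "mcs L ?w" by (rule lind_mcs[OF L E f c])
  have "\<forall>x \<theta>. Neg (All x \<theta>) \<in> ?w \<longrightarrow> (\<exists>e\<in>E. Neg (vsubst (id(x:=e)) \<theta>) \<in> ?w)"
    using lind_wit[OF L E f c] by blast
  then have "?w \<in> Wr L E" using m unfolding Wr_def by blast
  moreover have "a \<in> ?w" using lind_sup[of "{a}" L E] by blast
  ultimately show ?thesis by blast
qed

lemma prfs_le:
  assumes L: "pml L" and E: "infinite E" and s: "prfs L E a \<subseteq> prfs L E b"
  shows "Imp a b \<in> L"
proof (rule ccontr)
  assume h: "Imp a b \<notin> L"
  have "Neg (Neg (Imp a b)) \<notin> L"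
  proof
    assume "Neg (Neg (Imp a b)) \<in> L"
    then have "Imp a b \<in> L" by (intro conseq[OF L, of "[Neg (Neg (Imp a b))]"]) auto
    then show False using h by blast
  qed
  then obtain w where w: "w \<in> Wr L E" "Neg (Imp a b) \<in> w" using exists_world[OF L E] by blast
  have m: "mcs L w" using w(1) by (rule Wr_mcs)
  have "a \<in> w" by (rule mcs_conseq[OF L m, of "[Neg (Imp a b)]"]) (use w in auto)
  then have "b \<in> w" using s w(1) unfolding prfs_def by blast
  then have "Imp a b \<in> w" by (intro mcs_conseq[OF L m, of "[b]"]) auto
  then show False using w(2) mcs_Neg[OF L m] by blast
qed

lemma prfs_eq:
  assumes L: "pml L" and E: "infinite E" and s: "prfs L E a = prfs L E b"
  shows "Iff a b \<in> L"
proof -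
  have 1: "Imp a b \<in> L" by (rule prfs_le[OF L E]) (use s in simp)
  have 2: "Imp b a \<in> L" by (rule prfs_le[OF L E]) (use s in simp)
  show ?thesis by (rule conseq[OF L, of "[Imp a b, Imp b a]"]) (use 1 2 in auto)
qed

lemma prfs_And: "pml L \<Longrightarrow> prfs L E (And a b) = prfs L E a \<inter> prfs L E b"
  unfolding prfs_def using mcs_And Wr_mcs by blast

lemma box_lemma:
  assumes L: "pml L" and E: "infinite E" and lh: "logic_has P L" and w: "w \<in> Wr L E"
  shows "(prfs L E a \<in> VV P L E w) = (Box a \<in> w)"
proof -
  have m: "mcs L w" using w by (rule Wr_mcs)
  show ?thesis
  proof (cases "Monotonic \<in> P")
    case True
    have M: "axM \<in> L" using lh True unfolding logic_has_def by blast
    show ?thesis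
    proof
      assume "prfs L E a \<in> VV P L E w"
      then obtain c where c: "Box c \<in> w" "prfs L E c \<subseteq> prfs L E a" using True unfolding VV_def by auto
      have ca: "Imp c a \<in> L" by (rule prfs_le[OF L E c(2)])
      have 1: "Iff c (And c a) \<in> L" by (rule conseq[OF L, of "[Imp c a]"]) (use ca in auto)
      have 2: "Iff (Box c) (Box (And c a)) \<in> L" by (rule pml_RE[OF L 1])
      have 3: "Imp (Box (And c a)) (And (Box c) (Box a)) \<in> L" by (rule axM_inst[OF L M])
      have h2: "Iff (Box c) (Box (And c a)) \<in> w" by (rule mcs_L[OF L m 2])
      have h3: "Imp (Box (And c a)) (And (Box c) (Box a)) \<in> w" by (rule mcs_L[OF L m 3])
      show "Box a \<in> w"
        by (rule mcs_conseq[OF L m, of "[Box c, Iff (Box c) (Box (And c a)), Imp (Box (And c a)) (And (Box c) (Box a))]"])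
          (use c(1) h2 h3 in auto)
    next
      assume "Box a \<in> w"
      then show "prfs L E a \<in> VV P L E w" using True prfs_sub[of L E a] unfolding VV_def by auto
    qed
  next
    case False
    show ?thesis
    proof
      assume "prfs L E a \<in> VV P L E w"
      then obtain c where c: "Box c \<in> w" "prfs L E c = prfs L E a" using False unfolding VV_def by auto
      have 1: "Iff c a \<in> L" by (rule prfs_eq[OF L E c(2)])
      have 2: "Iff (Box c) (Box a) \<in> L" by (rule pml_RE[OF L 1])
      have h2: "Iff (Box c) (Box a) \<in> w" by (rule mcs_L[OF L m 2])
      show "Box a \<in> w" by (rule mcs_conseq[OF L m, of "[Box c, Iff (Box c) (Box a)]"]) (use c(1) h2 in auto)
    next
      assume "Box a \<in> w"
      then show "prfs L E a \<in> VV P L E w" using False unfolding VV_def by auto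
    qed
  qed
qed

lemma truth_lemma:
  assumes L: "pml L" and lh: "logic_has P L" and K: "finite K"
  shows "bv \<psi> \<subseteq> K \<Longrightarrow> (\<forall>v. s v \<in> - K) \<Longrightarrow>
    truth (Wr L (-K)) (VV P L (-K)) (-K) (II (-K)) s \<psi> = prfs L (-K) (vsubst s \<psi>)"
proof (induct \<psi> arbitrary: s)
  let ?E = "- K"
  have E: "infinite ?E" using K by (simp add: Compl_eq_Diff_UNIV Diff_infinite_finite)
  {
    case Top
    show ?case unfolding prfs_def using mcs_Top[OF L] Wr_mcs by auto
  next
    case Bot
    have "\<And>w. w \<in> Wr L ?E \<Longrightarrow> Bot \<notin> w"
    proof -
      fix w assume "w \<in> Wr L ?E"
      then have m: "mcs L w" by (rule Wr_mcs)
      have "Neg Bot \<in> w" by (rule mcs_L[OF L m]) (rule taut[OF L], simp)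
      then show "Bot \<notin> w" using mcs_Neg[OF L m] by blast
    qed
    then show ?case unfolding prfs_def by auto
  next
    case (Atom i ys)
    have "set (map s ys) \<subseteq> ?E" using Atom.prems(2) by auto
    then show ?case unfolding prfs_def II_def by auto
  next
    case (And a b)
    have "truth (Wr L ?E) (VV P L ?E) ?E (II ?E) s a = prfs L ?E (vsubst s a)"
      by (rule And.hyps(1)) (use And.prems in auto)
    moreover have "truth (Wr L ?E) (VV P L ?E) ?E (II ?E) s b = prfs L ?E (vsubst s b)"
      by (rule And.hyps(2)) (use And.prems in auto)
    ultimately show ?case using prfs_And[OF L] by simp
  next
    case (Neg a)
    have "truth (Wr L ?E) (VV P L ?E) ?E (II ?E) s a = prfs L ?E (vsubst s a)"
      by (rule Neg.hyps(1)) (use Neg.prems in auto)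
    moreover have "Wr L ?E - prfs L ?E (vsubst s a) = prfs L ?E (Neg (vsubst s a))"
      unfolding prfs_def using mcs_Neg[OF L] Wr_mcs by blast
    ultimately show ?case by simp
  next
    case (Box a)
    have "truth (Wr L ?E) (VV P L ?E) ?E (II ?E) s a = prfs L ?E (vsubst s a)"
      by (rule Box.hyps(1)) (use Box.prems in auto)
    then have "truth (Wr L ?E) (VV P L ?E) ?E (II ?E) s (Box a)
        = {w \<in> Wr L ?E. prfs L ?E (vsubst s a) \<in> VV P L ?E w}" by simp
    also have "\<dots> = {w \<in> Wr L ?E. Box (vsubst s a) \<in> w}"
      using box_lemma[OF L E lh] by blast
    finally show ?case unfolding prfs_def by simp
  next
    case (All x a)
    have bva: "bv a \<subseteq> K" and xK: "x \<in> K" using All.prems(1) by auto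
    let ?th = "vsubst (s(x:=x)) a"
    have IH: "\<And>d. d \<in> ?E \<Longrightarrow> truth (Wr L ?E) (VV P L ?E) ?E (II ?E) (s(x:=d)) a = prfs L ?E (vsubst (s(x:=d)) a)"
    proof -
      fix d assume d: "d \<in> ?E"
      have "\<forall>v. (s(x:=d)) v \<in> ?E" using All.prems(2) d by simp
      then show "truth (Wr L ?E) (VV P L ?E) ?E (II ?E) (s(x:=d)) a = prfs L ?E (vsubst (s(x:=d)) a)"
        by (intro All.hyps[OF bva])
    qed
    have vf: "vfree (s(x:=x)) a"
    proof (rule vfree_crit)
      fix v assume "(s(x:=x)) v \<noteq> v"
      then have "v \<noteq> x" by auto
      then have "(s(x:=x)) v = s v" by simp
      moreover have "s v \<notin> K" using All.prems(2) by auto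
      ultimately show "(s(x:=x)) v \<notin> bv a" using bva by auto
    qed
    have comp: "\<And>d. vsubst (id(x:=d)) ?th = vsubst (s(x:=d)) a"
    proof -
      fix d
      have "vsubst (id(x:=d)) ?th = vsubst (id(x:=d) \<circ> s(x:=x)) a" by (rule vsubst_comp[OF vf])
      also have "id(x:=d) \<circ> s(x:=x) = s(x:=d)"
      proof
        fix v
        show "(id(x:=d) \<circ> s(x:=x)) v = (s(x:=d)) v"
        proof (cases "v = x")
          case True then show ?thesis by simp
        next
          case False
          have "s v \<noteq> x" using All.prems(2) xK by auto
          then show ?thesis using False by simp
        qed
      qed
      finally show "vsubst (id(x:=d)) ?th = vsubst (s(x:=d)) a" .
    qed
    have bvth: "bv ?th \<subseteq> K" using bva by simp
    have key: "\<And>w. w \<in> Wr L ?E \<Longrightarrow> (All x ?th \<in> w) = (\<forall>d\<in>?E. vsubst (s(x:=d)) a \<in> w)"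
    proof -
      fix w assume w: "w \<in> Wr L ?E"
      have m: "mcs L w" using w by (rule Wr_mcs)
      show "(All x ?th \<in> w) = (\<forall>d\<in>?E. vsubst (s(x:=d)) a \<in> w)"
      proof
        assume h: "All x ?th \<in> w"
        show "\<forall>d\<in>?E. vsubst (s(x:=d)) a \<in> w"
        proof
          fix d assume d: "d \<in> ?E"
          have "d \<notin> bv ?th" using d bvth by auto
          then have "Imp (All x ?th) (vsubst (id(x:=d)) ?th) \<in> L" by (rule inst_scheme[OF L])
          then have "vsubst (id(x:=d)) ?th \<in> w" by (rule mcs_MP[OF L m h])
          then show "vsubst (s(x:=d)) a \<in> w" using comp by simp
        qed
      next
        assume h: "\<forall>d\<in>?E. vsubst (s(x:=d)) a \<in> w"
        show "All x ?th \<in> w"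
        proof (rule ccontr)
          assume "All x ?th \<notin> w"
          then have "Neg (All x ?th) \<in> w" using mcs_Neg[OF L m] by blast
          then obtain e where e: "e \<in> ?E" "Neg (vsubst (id(x:=e)) ?th) \<in> w"
            using w unfolding Wr_def by blast
          have "vsubst (id(x:=e)) ?th \<notin> w" using e(2) mcs_Neg[OF L m] by blast
          then show False using h e(1) comp by simp
        qed
      qed
    qed
    have "truth (Wr L ?E) (VV P L ?E) ?E (II ?E) s (All x a)
        = {w \<in> Wr L ?E. \<forall>d\<in>?E. w \<in> prfs L ?E (vsubst (s(x:=d)) a)}"
      using IH by simp
    also have "\<dots> = {w \<in> Wr L ?E. \<forall>d\<in>?E. vsubst (s(x:=d)) a \<in> w}"
      unfolding prfs_def by blast
    also have "\<dots> = {w \<in> Wr L ?E. All x ?th \<in> w}"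
      using key by blast
    finally show ?case unfolding prfs_def by simp
  }
qed


lemma LP_I: "(\<And>L. pml L \<Longrightarrow> logic_has P L \<Longrightarrow> a \<in> L) \<Longrightarrow> a \<in> LP P"
  unfolding LP_def by blast

lemma LP_D: "a \<in> LP P \<Longrightarrow> pml L \<Longrightarrow> logic_has P L \<Longrightarrow> a \<in> L"
  unfolding LP_def by blast

lemma LP_pml: "pml (LP P)"
  unfolding pml_def
proof (intro conjI allI impI)
  fix a assume "CPL_thm a"
  then show "a \<in> LP P" by (intro LP_I) (rule pml_CPL)
next
  fix \<sigma> a assume h: "a \<in> LP P \<and> psfree \<sigma> a"
  show "psubst \<sigma> a \<in> LP P"
  proof (rule LP_I)
    fix L assume L: "pml L" and lh: "logic_has P L"
    have "a \<in> L" using h L lh by (intro LP_D[of a P L]) auto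
    then show "psubst \<sigma> a \<in> L" using h by (intro pml_subst[OF L]) auto
  qed
next
  fix a b assume h: "a \<in> LP P \<and> Imp a b \<in> LP P"
  show "b \<in> LP P"
  proof (rule LP_I)
    fix L assume L: "pml L" and lh: "logic_has P L"
    have 1: "a \<in> L" using h L lh by (intro LP_D[of a P L]) auto
    have 2: "Imp a b \<in> L" using h L lh by (intro LP_D[of "Imp a b" P L]) auto
    show "b \<in> L" by (rule pml_MP[OF L 1 2])
  qed
next
  fix x a assume h: "a \<in> LP P"
  show "All x a \<in> LP P"
  proof (rule LP_I)
    fix L assume L: "pml L" and lh: "logic_has P L"
    have 1: "a \<in> L" using h L lh by (rule LP_D)
    show "All x a \<in> L" by (rule pml_Gen[OF L 1])
  qed
next
  fix a b assume h: "Iff a b \<in> LP P"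
  show "Iff (Box a) (Box b) \<in> LP P"
  proof (rule LP_I)
    fix L assume L: "pml L" and lh: "logic_has P L"
    have 1: "Iff a b \<in> L" using h L lh by (rule LP_D)
    show "Iff (Box a) (Box b) \<in> L" by (rule pml_RE[OF L 1])
  qed
qed

lemma LP_has: "logic_has P (LP P)"
  unfolding logic_has_def
proof (intro conjI impI)
  assume "Monotonic \<in> P"
  then show "axM \<in> LP P" by (intro LP_I) (simp add: logic_has_def)
next
  assume "Topped \<in> P"
  then show "axN \<in> LP P" by (intro LP_I) (simp add: logic_has_def)
next
  assume "Cufi \<in> P"
  then show "axC \<in> LP P" by (intro LP_I) (simp add: logic_has_def)
qed

lemma VV_Int:
  assumes L: "pml L" and lh: "logic_has P L" and CP: "Cufi \<in> P" and w: "w \<in> Wr L E"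
    and X: "X \<in> VV P L E w" and Y: "Y \<in> VV P L E w"
  shows "X \<inter> Y \<in> VV P L E w"
proof -
  have m: "mcs L w" using w by (rule Wr_mcs)
  have C: "axC \<in> L" using lh CP unfolding logic_has_def by blast
  have box: "\<And>a b. Box a \<in> w \<Longrightarrow> Box b \<in> w \<Longrightarrow> Box (And a b) \<in> w"
  proof -
    fix a b assume a: "Box a \<in> w" and b: "Box b \<in> w"
    have i: "Imp (And (Box a) (Box b)) (Box (And a b)) \<in> w" by (rule mcs_L[OF L m axC_inst[OF L C]])
    show "Box (And a b) \<in> w"
      by (rule mcs_conseq[OF L m, of "[Box a, Box b, Imp (And (Box a) (Box b)) (Box (And a b))]"]) (use a b i in auto)
  qed
  show ?thesis
  proof (cases "Monotonic \<in> P")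
    case True
    obtain a where a: "X \<subseteq> Wr L E" "Box a \<in> w" "prfs L E a \<subseteq> X" using X True unfolding VV_def by auto
    obtain b where b: "Y \<subseteq> Wr L E" "Box b \<in> w" "prfs L E b \<subseteq> Y" using Y True unfolding VV_def by auto
    have "Box (And a b) \<in> w" by (rule box[OF a(2) b(2)])
    moreover have "prfs L E (And a b) \<subseteq> X \<inter> Y" using a(3) b(3) prfs_And[OF L, of E a b] by blast
    moreover have "X \<inter> Y \<subseteq> Wr L E" using a(1) by blast
    ultimately show ?thesis using True unfolding VV_def by auto
  next
    case False
    obtain a where a: "Box a \<in> w" "X = prfs L E a" using X False unfolding VV_def by auto
    obtain b where b: "Box b \<in> w" "Y = prfs L E b" using Y False unfolding VV_def by auto
    have "Box (And a b) \<in> w" by (rule box[OF a(1) b(1)])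
    moreover have "X \<inter> Y = prfs L E (And a b)" using a(2) b(2) prfs_And[OF L, of E a b] by simp
    ultimately show ?thesis using False unfolding VV_def by auto
  qed
qed

lemma canon_frame:
  assumes L: "pml L" and lh: "logic_has P L" and E: "infinite E" and ne: "Wr L E \<noteq> {}"
  shows "nframe (Wr L E) (VV P L E) \<and> frame_has P (Wr L E) (VV P L E)"
proof
  show "nframe (Wr L E) (VV P L E)" unfolding nframe_def
  proof (intro conjI ballI)
    show "Wr L E \<noteq> {}" by (rule ne)
    fix c assume "c \<in> Wr L E"
    show "VV P L E c \<subseteq> Pow (Wr L E)" unfolding VV_def using prfs_sub[of L E] by auto
  qed
next
  show "frame_has P (Wr L E) (VV P L E)" unfolding frame_has_def
  proof (intro conjI impI)
    assume MP: "Monotonic \<in> P"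
    show "\<forall>c\<in>Wr L E. \<forall>X\<in>VV P L E c. \<forall>Y. X \<subseteq> Y \<and> Y \<subseteq> Wr L E \<longrightarrow> Y \<in> VV P L E c"
    proof (intro ballI allI impI)
      fix c X Y assume X: "X \<in> VV P L E c" and XY: "X \<subseteq> Y \<and> Y \<subseteq> Wr L E"
      obtain a where a: "Box a \<in> c" "prfs L E a \<subseteq> X" using X MP unfolding VV_def by auto
      have "prfs L E a \<subseteq> Y" using a(2) XY by blast
      then show "Y \<in> VV P L E c" using a(1) XY MP unfolding VV_def by auto
    qed
  next
    assume TP: "Topped \<in> P"
    have N: "axN \<in> L" using lh TP unfolding logic_has_def by blast
    show "\<forall>c\<in>Wr L E. Wr L E \<in> VV P L E c"
    proof
      fix c assume c: "c \<in> Wr L E"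
      have m: "mcs L c" using c by (rule Wr_mcs)
      have "Box Top \<in> c" using mcs_L[OF L m N] unfolding axN_def .
      then have "prfs L E Top \<in> VV P L E c" using box_lemma[OF L E lh c] by blast
      moreover have "prfs L E Top = Wr L E" unfolding prfs_def using mcs_Top[OF L] Wr_mcs by blast
      ultimately show "Wr L E \<in> VV P L E c" by simp
    qed
  next
    assume CP: "Cufi \<in> P"
    show "\<forall>c\<in>Wr L E. \<forall>F. finite F \<and> F \<noteq> {} \<and> F \<subseteq> VV P L E c \<longrightarrow> \<Inter> F \<in> VV P L E c"
    proof (intro ballI allI impI)
      fix c F assume c: "c \<in> Wr L E" and F: "finite F \<and> F \<noteq> {} \<and> F \<subseteq> VV P L E c"
      have "finite F" "F \<noteq> {}" "F \<subseteq> VV P L E c" using F by auto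
      then show "\<Inter> F \<in> VV P L E c"
      proof (induct F rule: finite_ne_induct)
        case (singleton X) then show ?case by simp
      next
        case (insert X F)
        have sub: "insert X F \<subseteq> VV P L E c" by (rule insert.prems)
        have "X \<in> VV P L E c" using sub by blast
        moreover have "F \<subseteq> VV P L E c" using sub by blast
        then have "\<Inter> F \<in> VV P L E c" by (rule insert.hyps(4))
        ultimately have "X \<inter> \<Inter> F \<in> VV P L E c" by (rule VV_Int[OF L lh CP c])
        then show ?case by simp
      qed
    qed
  qed
qed

fun clos :: "nat list \<Rightarrow> fm \<Rightarrow> fm" where
  "clos [] a = a"
| "clos (x # xs) a = All x (clos xs a)"

lemma fv_clos: "fv (clos xs a) = fv a - set xs"
  by (induct xs) auto

lemma bv_clos: "bv (clos xs a) = set xs \<union> bv a"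
  by (induct xs) auto

lemma clos_L: "pml L \<Longrightarrow> clos xs a \<in> L \<Longrightarrow> a \<in> L"
proof (induct xs)
  case Nil then show ?case by simp
next
  case (Cons x xs)
  have "Imp (All x (clos xs a)) (vsubst (id(x:=x)) (clos xs a)) \<in> L"
    by (rule inst_scheme_vf[OF Cons.prems(1)]) simp
  then have imp: "Imp (All x (clos xs a)) (clos xs a) \<in> L" by simp
  have al: "All x (clos xs a) \<in> L" using Cons.prems(2) by simp
  have "clos xs a \<in> L" by (rule pml_MP[OF Cons.prems(1) al imp])
  then show ?case using Cons by blast
qed

lemma truth_clos:
  assumes "\<forall>A. (\<forall>v. A v \<in> D) \<longrightarrow> truth C V D I A a = C"
  shows "(\<forall>v. A v \<in> D) \<Longrightarrow> truth C V D I A (clos xs a) = C"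
proof (induct xs arbitrary: A)
  case Nil then show ?case using assms by simp
next
  case (Cons x xs)
  have "\<And>d. d \<in> D \<Longrightarrow> truth C V D I (A(x:=d)) (clos xs a) = C"
  proof -
    fix d assume "d \<in> D"
    then have "\<forall>v. (A(x:=d)) v \<in> D" using Cons.prems by simp
    then show "truth C V D I (A(x:=d)) (clos xs a) = C" by (rule Cons.hyps)
  qed
  then show ?case by (auto simp del: fun_upd_apply)
qed

lemma completeness:
  assumes H: "\<forall>(C :: fm set set) V. nframe C V \<and> frame_has P C V \<longrightarrow> fvalid C V TYPE(nat) \<phi>"
  shows "\<phi> \<in> LP P"
proof (rule ccontr)
  assume n\<phi>: "\<phi> \<notin> LP P"
  let ?L = "LP P"
  have L: "pml ?L" by (rule LP_pml)
  have lh: "logic_has P ?L" by (rule LP_has)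
  define xs where "xs = sorted_list_of_set (fv \<phi>)"
  define \<Phi> where "\<Phi> = clos xs \<phi>"
  have fvP: "fv \<Phi> = {}" unfolding \<Phi>_def xs_def by (simp add: fv_clos)
  have nP: "\<Phi> \<notin> ?L" using clos_L[OF L] n\<phi> unfolding \<Phi>_def by blast
  define K where "K = bv \<Phi>"
  have K: "finite K" unfolding K_def by simp
  let ?E = "- K"
  have E: "infinite ?E" using K by (simp add: Compl_eq_Diff_UNIV Diff_infinite_finite)
  have "Neg (Neg \<Phi>) \<notin> ?L"
  proof
    assume "Neg (Neg \<Phi>) \<in> ?L"
    then have "\<Phi> \<in> ?L" by (intro conseq[OF L, of "[Neg (Neg \<Phi>)]"]) auto
    then show False using nP by blast
  qed
  then obtain w where w: "w \<in> Wr ?L ?E" "Neg \<Phi> \<in> w" using exists_world[OF L E] by blast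
  have m: "mcs ?L w" using w(1) by (rule Wr_mcs)
  have wP: "\<Phi> \<notin> w" using w(2) mcs_Neg[OF L m] by blast
  have fr: "nframe (Wr ?L ?E) (VV P ?L ?E) \<and> frame_has P (Wr ?L ?E) (VV P ?L ?E)"
    by (rule canon_frame[OF L lh E]) (use w(1) in blast)
  have fv: "fvalid (Wr ?L ?E) (VV P ?L ?E) TYPE(nat) \<phi>" using H fr by blast
  have "?E \<noteq> {}" using E by (rule infinite_imp_nonempty)
  then obtain e0 where e0: "e0 \<in> ?E" by blast
  define s where "s = (\<lambda>v::nat. e0)"
  have sE: "\<forall>v. s v \<in> ?E" unfolding s_def using e0 by simp
  have im: "is_model (Wr ?L ?E) ?E (II ?E)" unfolding is_model_def II_def using e0 by auto
  have all: "\<forall>A. (\<forall>v. A v \<in> ?E) \<longrightarrow> truth (Wr ?L ?E) (VV P ?L ?E) ?E (II ?E) A \<phi> = Wr ?L ?E"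
    using fv im unfolding fvalid_def by blast
  have t1: "truth (Wr ?L ?E) (VV P ?L ?E) ?E (II ?E) s \<Phi> = Wr ?L ?E"
    unfolding \<Phi>_def by (rule truth_clos[OF all sE])
  have "truth (Wr ?L ?E) (VV P ?L ?E) ?E (II ?E) s \<Phi> = prfs ?L ?E (vsubst s \<Phi>)"
    by (rule truth_lemma[OF L lh K]) (use sE in \<open>simp_all add: K_def\<close>)
  moreover have "vsubst s \<Phi> = vsubst id \<Phi>" by (rule vsubst_cong) (simp add: fvP)
  ultimately have "Wr ?L ?E = prfs ?L ?E \<Phi>" using t1 by simp
  then have "\<Phi> \<in> w" using w(1) unfolding prfs_def by blast
  then show False using wP by blast
qed

theorem mainTheorem9:
  fixes P :: "mprop set" and \<phi> :: fm
  shows "(\<phi> \<in> LP P \<longrightarrow>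
            (\<forall>(C :: 'w set) V. nframe C V \<and> frame_has P C V \<longrightarrow> fvalid C V TYPE('d) \<phi>))
       \<and> ((\<forall>(C :: fm set set) V. nframe C V \<and> frame_has P C V \<longrightarrow> fvalid C V TYPE(nat) \<phi>)
            \<longrightarrow> \<phi> \<in> LP P)"
proof (intro conjI impI allI)
  fix C :: "'w set" and V
  assume "\<phi> \<in> LP P" and "nframe C V \<and> frame_has P C V"
  then show "fvalid C V TYPE('d) \<phi>" using soundness[of \<phi> P C V] by blast
next
  assume "\<forall>(C :: fm set set) V. nframe C V \<and> frame_has P C V \<longrightarrow> fvalid C V TYPE(nat) \<phi>"
  then show "\<phi> \<in> LP P" by (rule completeness)
qed


end
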